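(* For every $n\in\mathbb{N}$, $\mathrm{C}_{\{0,\ldots,n\}}<_{sW}\mathrm{C}_{\sharp=n+1}$.
   Context: Represented spaces carry partial surjections $\delta:\subseteq\mathbb{N}^\mathbb{N}\to X$; a realizer $F$ of $f$ satisfies $\delta_YF(p)\in f(\delta_X(p))$ for $p\in\operatorname{dom}(f\delta_X)$. $f\leq_{sW}g$ iff there are computable partial $K,H$ on Baire space with $KGH$ realizing $f$ for every realizer $G$ of $g$; $f<_{sW}g$ means $f\leq_{sW}g$ and $g\not\leq_{sW}f$. $\mathrm{C}_{\{0,\ldots,n\}}$ is closed choice on the discrete space $\{0,\ldots,n\}$: given a non-empty subset via an enumeration of its complement, output an element. Closed subsets of Cantor space are named by binary trees (set of infinite paths); $\mathrm{C}_{\sharp=m}$ is the restriction of $\mathrm{C}_{\{0,1\}^\mathbb{N}}$ (output any point of the given non-empty closed set) to trees having exactly $m$ vertices at each level $k$ with $2^k\geq m$ and in which, from some finite depth on, every vertex has exactly one child. *)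

theory Defs
  imports Main "HOL-Library.Nat_Bijection"
begin

datatype recf = Zr | Sc | Proj nat | Cn recf "recf list" | Pr recf recf | Mn recf

definition nth0 :: "nat list \<Rightarrow> nat \<Rightarrow> nat" where
  "nth0 xs i = (if i < length xs then xs ! i else 0)"

inductive evalr :: "recf \<Rightarrow> nat list \<Rightarrow> nat \<Rightarrow> bool" where
  ev_Zr: "evalr Zr xs 0"
| ev_Sc: "evalr Sc xs (Suc (nth0 xs 0))"
| ev_Proj: "evalr (Proj i) xs (nth0 xs i)"
| ev_Cn: "\<lbrakk>length ys = length gs; \<forall>j<length gs. evalr (gs ! j) xs (ys ! j); evalr f ys r\<rbrakk>
          \<Longrightarrow> evalr (Cn f gs) xs r"
| ev_Pr0: "evalr f xs r \<Longrightarrow> evalr (Pr f g) (0 # xs) r"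
| ev_PrS: "\<lbrakk>evalr (Pr f g) (n # xs) y; evalr g (n # y # xs) r\<rbrakk>
          \<Longrightarrow> evalr (Pr f g) (Suc n # xs) r"
| ev_Mn: "\<lbrakk>evalr f (n # xs) 0; \<forall>m<n. \<exists>y. evalr f (m # xs) (Suc y)\<rbrakk>
          \<Longrightarrow> evalr (Mn f) xs n"

type_synonym baire = "nat \<Rightarrow> nat"

definition prefix_code :: "baire \<Rightarrow> nat \<Rightarrow> nat" where
  "prefix_code p k = list_encode (map p [0..<k])"

text \<open>Program phi computes output q from input p: to produce q n, phi is queried
  on (n, p|0), (n, p|1), ...; answer 0 means "read more input", answer Suc v means
  "q n = v".\<close>
definition tcomputes :: "recf \<Rightarrow> baire \<Rightarrow> baire \<Rightarrow> bool" where
  "tcomputes \<phi> p q \<longleftrightarrow>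
     (\<forall>n. \<exists>k. evalr \<phi> [n, prefix_code p k] (Suc (q n)) \<and>
               (\<forall>k'<k. evalr \<phi> [n, prefix_code p k'] 0))"

text \<open>A representation is a partial map from Baire space; a problem is a multi-valued
  function f :: 'a => 'b set with dom f = {x. f x ~= {}}.  Realizers are partial
  functions on Baire space.\<close>

definition is_realizer ::
  "(baire \<Rightarrow> 'a option) \<Rightarrow> (baire \<Rightarrow> 'b option) \<Rightarrow> ('a \<Rightarrow> 'b set) \<Rightarrow> (baire \<Rightarrow> baire option) \<Rightarrow> bool" where
  "is_realizer \<delta>X \<delta>Y f F \<longleftrightarrow>
     (\<forall>p x. \<delta>X p = Some x \<and> f x \<noteq> {} \<longrightarrow>
        (\<exists>q y. F p = Some q \<and> \<delta>Y q = Some y \<and> y \<in> f x))"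

definition sW_le ::
  "(baire \<Rightarrow> 'a option) \<Rightarrow> (baire \<Rightarrow> 'b option) \<Rightarrow> ('a \<Rightarrow> 'b set) \<Rightarrow>
   (baire \<Rightarrow> 'c option) \<Rightarrow> (baire \<Rightarrow> 'd option) \<Rightarrow> ('c \<Rightarrow> 'd set) \<Rightarrow> bool" where
  "sW_le \<delta>X \<delta>Y f \<delta>U \<delta>V g \<longleftrightarrow>
     (\<exists>\<phi>K \<phi>H. \<forall>G. is_realizer \<delta>U \<delta>V g G \<longrightarrow>
        (\<forall>p x. \<delta>X p = Some x \<and> f x \<noteq> {} \<longrightarrow>
           (\<exists>r q s y. tcomputes \<phi>H p r \<and> G r = Some q \<and> tcomputes \<phi>K q s \<and>
                     \<delta>Y s = Some y \<and> y \<in> f x)))"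

definition sW_less ::
  "(baire \<Rightarrow> 'a option) \<Rightarrow> (baire \<Rightarrow> 'b option) \<Rightarrow> ('a \<Rightarrow> 'b set) \<Rightarrow>
   (baire \<Rightarrow> 'c option) \<Rightarrow> (baire \<Rightarrow> 'd option) \<Rightarrow> ('c \<Rightarrow> 'd set) \<Rightarrow> bool" where
  "sW_less \<delta>X \<delta>Y f \<delta>U \<delta>V g \<longleftrightarrow> sW_le \<delta>X \<delta>Y f \<delta>U \<delta>V g \<and> \<not> sW_le \<delta>U \<delta>V g \<delta>X \<delta>Y f"

text \<open>Closed subsets A of {0..n} are named by enumerations of their complement:
  p names A iff all values of p are <= n+1 and A = {k <= n. Suc k not in range p}
  (value 0 is padding).\<close>
definition delta_fin_closed :: "nat \<Rightarrow> baire \<Rightarrow> nat set option" where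
  "delta_fin_closed n p =
     (if \<forall>i. p i \<le> Suc n then Some {k. k \<le> n \<and> (\<forall>i. p i \<noteq> Suc k)} else None)"

definition delta_fin :: "nat \<Rightarrow> baire \<Rightarrow> nat option" where
  "delta_fin n q = (if q 0 \<le> n then Some (q 0) else None)"

definition C_fin :: "nat set \<Rightarrow> nat set" where
  "C_fin A = A"

text \<open>Binary strings are coded bijectively by natural numbers.\<close>
fun bcode :: "bool list \<Rightarrow> nat" where
  "bcode [] = 0"
| "bcode (b # w) = 2 * bcode w + (if b then 2 else 1)"

definition is_tree :: "bool list set \<Rightarrow> bool" where
  "is_tree T \<longleftrightarrow> (\<forall>w v. w @ v \<in> T \<longrightarrow> w \<in> T)"

definition delta_tree :: "baire \<Rightarrow> bool list set option" where
  "delta_tree p =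
     (if (\<forall>i. p i \<le> 1) \<and> is_tree {w. p (bcode w) = 1}
      then Some {w. p (bcode w) = 1} else None)"

definition delta_cantor :: "baire \<Rightarrow> (nat \<Rightarrow> bool) option" where
  "delta_cantor q = (if \<forall>i. q i \<le> 1 then Some (\<lambda>i. q i = 1) else None)"

definition paths :: "bool list set \<Rightarrow> (nat \<Rightarrow> bool) set" where
  "paths T = {x. \<forall>k. map x [0..<k] \<in> T}"

definition width_tree :: "nat \<Rightarrow> bool list set \<Rightarrow> bool" where
  "width_tree m T \<longleftrightarrow>
     (\<forall>k. m \<le> 2 ^ k \<longrightarrow> card {w \<in> T. length w = k} = m) \<and>
     (\<exists>d. \<forall>w \<in> T. d \<le> length w \<longrightarrow> card {b. w @ [b] \<in> T} = 1)"

text \<open>C_{#=m}: the restriction of C_{2^N} (given a tree, output a path) to trees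
  satisfying width_tree m; on other trees the problem is undefined.\<close>
definition C_width :: "nat \<Rightarrow> bool list set \<Rightarrow> (nat \<Rightarrow> bool) set" where
  "C_width m T = (if width_tree m T then paths T else {})"

end

theory Submission
  imports Defs
begin


inductive_cases evZrE: "evalr Zr xs r"
inductive_cases evScE: "evalr Sc xs r"
inductive_cases evProjE: "evalr (Proj i) xs r"
inductive_cases evCnE: "evalr (Cn f gs) xs r"
inductive_cases evPr0E: "evalr (Pr f g) (0 # xs) r"
inductive_cases evPrSE: "evalr (Pr f g) (Suc n # xs) r"
inductive_cases evMnE: "evalr (Mn f) xs r"

lemma evalr_det: "evalr f xs r \<Longrightarrow> evalr f xs r' \<Longrightarrow> r = r'"
proof (induction arbitrary: r' rule: evalr.induct)
  case (ev_Zr xs) then show ?case by (auto elim: evZrE)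
next
  case (ev_Sc xs) then show ?case by (auto elim: evScE)
next
  case (ev_Proj i xs) then show ?case by (auto elim: evProjE)
next
  case (ev_Cn ys gs xs f r)
  from ev_Cn.prems obtain ys' where y': "length ys' = length gs"
    "\<forall>j<length gs. evalr (gs ! j) xs (ys' ! j)" "evalr f ys' r'"
    by (rule evCnE) blast
  have "ys = ys'"
  proof (rule nth_equalityI)
    show "length ys = length ys'" using y'(1) ev_Cn.hyps(1) by simp
    fix j assume "j < length ys"
    then have "j < length gs" using ev_Cn.hyps(1) by simp
    then show "ys ! j = ys' ! j" using ev_Cn.IH(1) y'(2) by blast
  qed
  then show ?case using ev_Cn.IH(2) y'(3) by blast
next
  case (ev_Pr0 f xs r g)
  from ev_Pr0.prems have "evalr f xs r'" by (rule evPr0E)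
  then show ?case using ev_Pr0.IH by blast
next
  case (ev_PrS f g n xs y r)
  from ev_PrS.prems obtain y' where "evalr (Pr f g) (n # xs) y'" "evalr g (n # y' # xs) r'"
    by (rule evPrSE) blast
  then show ?case using ev_PrS.IH by blast
next
  case (ev_Mn f n xs)
  note IH1 = ev_Mn.IH(1) and IH2 = ev_Mn.IH(2)
  have r'1: "evalr f (r' # xs) 0" using ev_Mn.prems by (rule evMnE)
  have r'2: "\<forall>m<r'. \<exists>y. evalr f (m # xs) (Suc y)" using ev_Mn.prems by (rule evMnE)
  show ?case
  proof (rule ccontr)
    assume "n \<noteq> r'"
    then consider "n < r'" | "r' < n" by linarith
    then show False
    proof cases
      case 1
      from r'2 1 obtain y where "evalr f (n # xs) (Suc y)" by blast
      with IH1 have "0 = Suc y" by blast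
      then show False by simp
    next
      case 2
      from IH2 2 have "\<exists>y. evalr f (r' # xs) (Suc y) \<and> (\<forall>r''. evalr f (r' # xs) r'' \<longrightarrow> Suc y = r'')"
        by simp
      then obtain y where "\<forall>r''. evalr f (r' # xs) r'' \<longrightarrow> Suc y = r''" by blast
      with r'1 have "Suc y = 0" by blast
      then show False by simp
    qed
  qed
qed



lemma tcomputes_det: "tcomputes \<phi> p q \<Longrightarrow> tcomputes \<phi> p q' \<Longrightarrow> q = q'"
proof
  fix n assume a: "tcomputes \<phi> p q" "tcomputes \<phi> p q'"
  obtain k where k: "evalr \<phi> [n, prefix_code p k] (Suc (q n))" "\<forall>k'<k. evalr \<phi> [n, prefix_code p k'] 0"
    using a(1) unfolding tcomputes_def by blast
  obtain k2 where k2: "evalr \<phi> [n, prefix_code p k2] (Suc (q' n))" "\<forall>k'<k2. evalr \<phi> [n, prefix_code p k'] 0"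
    using a(2) unfolding tcomputes_def by blast
  have "k = k2"
  proof (rule ccontr)
    assume "k \<noteq> k2"
    then consider "k < k2" | "k2 < k" by linarith
    then show False
    proof cases
      case 1 then have "evalr \<phi> [n, prefix_code p k] 0" using k2(2) by blast
      then have "Suc (q n) = 0" using k(1) evalr_det by blast
      then show False by simp
    next
      case 2 then have "evalr \<phi> [n, prefix_code p k2] 0" using k(2) by blast
      then have "Suc (q' n) = 0" using k2(1) evalr_det by blast
      then show False by simp
    qed
  qed
  then have "Suc (q n) = Suc (q' n)" using k(1) k2(1) evalr_det by blast
  then show "q n = q' n" by simp
qed

definition comp :: "nat \<Rightarrow> (nat list \<Rightarrow> nat) \<Rightarrow> bool" where
  "comp m F \<longleftrightarrow> (\<exists>f. \<forall>xs. length xs = m \<longrightarrow> evalr f xs (F xs))"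

lemma comp_ext: "comp m F \<Longrightarrow> (\<And>xs. length xs = m \<Longrightarrow> F xs = G xs) \<Longrightarrow> comp m G"
  unfolding comp_def by (erule exE, rule_tac x=f in exI, simp)

lemma comp_zero: "comp m (\<lambda>xs. 0)"
  unfolding comp_def by (intro exI allI impI) (rule ev_Zr)

lemma comp_succ: "comp m (\<lambda>xs. Suc (nth0 xs 0))"
  unfolding comp_def by (intro exI allI impI) (rule ev_Sc)

lemma comp_nth0: "comp m (\<lambda>xs. nth0 xs i)"
  unfolding comp_def by (intro exI allI impI) (rule ev_Proj)

lemma comp_cn:
  assumes "comp k F" "length Gs = k" "\<forall>G\<in>set Gs. comp m G"
  shows "comp m (\<lambda>xs. F (map (\<lambda>G. G xs) Gs))"
proof -
  obtain f where f: "\<forall>xs. length xs = k \<longrightarrow> evalr f xs (F xs)" using assms(1) unfolding comp_def by blast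
  define gs where "gs = map (\<lambda>G. SOME g. \<forall>xs. length xs = m \<longrightarrow> evalr g xs (G xs)) Gs"
  have g: "\<forall>j<length Gs. \<forall>xs. length xs = m \<longrightarrow> evalr (gs ! j) xs ((Gs ! j) xs)"
  proof (intro allI impI)
    fix j and xs :: "nat list" assume j: "j < length Gs" and "length xs = m"
    have "\<exists>g. \<forall>xs. length xs = m \<longrightarrow> evalr g xs ((Gs!j) xs)" using assms(3) j comp_def by auto
    then have "\<forall>xs. length xs = m \<longrightarrow> evalr (gs!j) xs ((Gs!j) xs)"
      unfolding gs_def using j by (simp add: someI_ex[where P="\<lambda>g. \<forall>xs. length xs = m \<longrightarrow> evalr g xs ((Gs!j) xs)"])
    then show "evalr (gs ! j) xs ((Gs ! j) xs)" using \<open>length xs = m\<close> by blast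
  qed
  show ?thesis unfolding comp_def
  proof (intro exI allI impI)
    fix xs :: "nat list" assume "length xs = m"
    have lg: "length gs = length Gs" by (simp add: gs_def)
    show "evalr (Cn f gs) xs (F (map (\<lambda>G. G xs) Gs))"
    proof (rule ev_Cn[where ys="map (\<lambda>G. G xs) Gs"])
      show "length (map (\<lambda>G. G xs) Gs) = length gs" using lg by simp
      show "\<forall>j<length gs. evalr (gs ! j) xs (map (\<lambda>G. G xs) Gs ! j)"
        using g \<open>length xs = m\<close> lg by simp
      show "evalr f (map (\<lambda>G. G xs) Gs) (F (map (\<lambda>G. G xs) Gs))"
        using f assms(2) by simp
    qed
  qed
qed

lemma map_nth0_upt: "map (nth0 xs) [0..<length xs] = xs"
  by (rule nth_equalityI) (auto simp: nth0_def)

lemma comp_rec: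
  assumes "comp m B" "comp (Suc (Suc m)) (\<lambda>ys. S (nth0 ys 0) (nth0 ys 1) (tl (tl ys)))" "comp m N"
  shows "comp m (\<lambda>xs. rec_nat (B xs) (\<lambda>n y. S n y xs) (N xs))"
proof -
  obtain fB where fB: "\<forall>xs. length xs = m \<longrightarrow> evalr fB xs (B xs)" using assms(1) unfolding comp_def by blast
  obtain fS where fS: "\<forall>ys. length ys = Suc (Suc m) \<longrightarrow> evalr fS ys (S (nth0 ys 0) (nth0 ys 1) (tl (tl ys)))"
    using assms(2) unfolding comp_def by blast
  obtain fN where fN: "\<forall>xs. length xs = m \<longrightarrow> evalr fN xs (N xs)" using assms(3) unfolding comp_def by blast
  have pr: "evalr (Pr fB fS) (n # xs) (rec_nat (B xs) (\<lambda>n y. S n y xs) n)" if "length xs = m" for n xs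
  proof (induction n)
    case 0 then show ?case using fB that by (simp add: ev_Pr0)
  next
    case (Suc n)
    have "evalr fS (n # rec_nat (B xs) (\<lambda>n y. S n y xs) n # xs) (S n (rec_nat (B xs) (\<lambda>n y. S n y xs) n) xs)"
      using fS[rule_format, of "n # rec_nat (B xs) (\<lambda>n y. S n y xs) n # xs"] that by (simp add: nth0_def)
    then show ?case using Suc by (simp add: ev_PrS)
  qed
  show ?thesis unfolding comp_def
  proof (intro exI allI impI)
    fix xs :: "nat list" assume l: "length xs = m"
    show "evalr (Cn (Pr fB fS) (fN # map Proj [0..<m])) xs (rec_nat (B xs) (\<lambda>n y. S n y xs) (N xs))"
    proof (rule ev_Cn[where ys="N xs # xs"])
      show "length (N xs # xs) = length (fN # map Proj [0..<m])" using l by simp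
      show "\<forall>j<length (fN # map Proj [0..<m]). evalr ((fN # map Proj [0..<m]) ! j) xs ((N xs # xs) ! j)"
      proof (intro allI impI)
        fix j assume j: "j < length (fN # map Proj [0..<m])"
        show "evalr ((fN # map Proj [0..<m]) ! j) xs ((N xs # xs) ! j)"
        proof (cases j)
          case 0 then show ?thesis using fN l by simp
        next
          case (Suc i)
          then have "i < m" using j by simp
          then have "(N xs # xs) ! j = nth0 xs i" using Suc l by (simp add: nth0_def)
          moreover have "(fN # map Proj [0..<m]) ! j = Proj i" using Suc \<open>i < m\<close> by simp
          ultimately show ?thesis by (simp add: ev_Proj)
        qed
      qed
      show "evalr (Pr fB fS) (N xs # xs) (rec_nat (B xs) (\<lambda>n y. S n y xs) (N xs))" using pr l by simp
    qed
  qed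
qed


lemma nth0_tl[simp]: "nth0 (tl xs) i = nth0 xs (Suc i)"
  by (cases xs) (auto simp: nth0_def)

lemma nth0_Cons_0[simp]: "nth0 (x # xs) 0 = x" by (simp add: nth0_def)
lemma nth0_Cons_Suc[simp]: "nth0 (x # xs) (Suc i) = nth0 xs i" by (simp add: nth0_def)

lemma comp_comp1:
  assumes "comp 1 (\<lambda>xs. f (nth0 xs 0))" "comp m F"
  shows "comp m (\<lambda>xs. f (F xs))"
proof -
  have "comp m (\<lambda>xs. (\<lambda>xs. f (nth0 xs 0)) (map (\<lambda>G. G xs) [F]))"
    by (rule comp_cn[OF assms(1)]) (use assms(2) in auto)
  then show ?thesis by (rule comp_ext) simp
qed

lemma comp_comp2:
  assumes "comp 2 (\<lambda>xs. f (nth0 xs 0) (nth0 xs 1))" "comp m F" "comp m G"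
  shows "comp m (\<lambda>xs. f (F xs) (G xs))"
proof -
  have "comp m (\<lambda>xs. (\<lambda>xs. f (nth0 xs 0) (nth0 xs 1)) (map (\<lambda>G. G xs) [F, G]))"
    by (rule comp_cn[OF assms(1)]) (use assms(2,3) in auto)
  then show ?thesis by (rule comp_ext) simp
qed

lemma comp_comp3:
  assumes "comp 3 (\<lambda>xs. f (nth0 xs 0) (nth0 xs 1) (nth0 xs 2))" "comp m F" "comp m G" "comp m H"
  shows "comp m (\<lambda>xs. f (F xs) (G xs) (H xs))"
proof -
  have "comp m (\<lambda>xs. (\<lambda>xs. f (nth0 xs 0) (nth0 xs 1) (nth0 xs 2)) (map (\<lambda>G. G xs) [F, G, H]))"
    by (rule comp_cn[OF assms(1)]) (use assms(2,3,4) in auto)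
  then show ?thesis by (rule comp_ext) (simp add: numeral_eq_Suc)
qed

lemma comp_const: "comp m (\<lambda>xs. c)"
proof (induction c)
  case 0 then show ?case by (rule comp_zero)
next
  case (Suc c)
  show ?case using comp_comp1[where f=Suc, OF comp_succ Suc] .
qed

lemma comp_tl:
  assumes "comp m B" shows "comp (Suc m) (\<lambda>ys. B (tl ys))"
proof -
  have "comp (Suc m) (\<lambda>ys. B (map (\<lambda>G. G ys) (map (\<lambda>i ys. nth0 ys (Suc i)) [0..<m])))"
    by (rule comp_cn[OF assms]) (auto intro: comp_nth0)
  then show ?thesis
  proof (rule comp_ext)
    fix ys :: "nat list" assume l: "length ys = Suc m"
    have "map (\<lambda>G. G ys) (map (\<lambda>i ys. nth0 ys (Suc i)) [0..<m]) = tl ys"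
      by (rule nth_equalityI) (use l in \<open>auto simp: nth0_def nth_tl\<close>)
    then show "B (map (\<lambda>G. G ys) (map (\<lambda>i ys. nth0 ys (Suc i)) [0..<m])) = B (tl ys)" by simp
  qed
qed

lemma rec_add: "rec_nat b (\<lambda>n y. Suc y) a = a + b" by (induction a) auto
lemma rec_mult: "rec_nat 0 (\<lambda>n y. y + b) a = a * b" by (induction a) auto
lemma rec_sub: "rec_nat a (\<lambda>n y. y - 1) b = a - b" by (induction b) auto
lemma rec_pow: "rec_nat 1 (\<lambda>n y. y * a) b = (a::nat) ^ b" by (induction b) (simp_all add: mult.commute[of _ a])

lemma comp_add2: "comp 2 (\<lambda>xs. nth0 xs 0 + nth0 xs 1)"
proof -
  have "comp 2 (\<lambda>xs. rec_nat (nth0 xs 1) (\<lambda>n y. (\<lambda>n y xs. Suc y) n y xs) (nth0 xs 0))"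
    by (rule comp_rec) (auto intro: comp_nth0 comp_comp1[OF comp_succ])
  then show ?thesis by (rule comp_ext) (simp add: rec_add)
qed

lemma comp_mult2: "comp 2 (\<lambda>xs. nth0 xs 0 * nth0 xs 1)"
proof -
  have "comp 2 (\<lambda>xs. rec_nat 0 (\<lambda>n y. (\<lambda>n y xs. y + nth0 xs 1) n y xs) (nth0 xs 0))"
    by (rule comp_rec) (auto intro: comp_nth0 comp_const comp_comp2[OF comp_add2])
  then show ?thesis by (rule comp_ext) (simp add: rec_mult)
qed

lemma comp_sub2: "comp 2 (\<lambda>xs. nth0 xs 0 - nth0 xs 1)"
proof -
  have pred: "comp 1 (\<lambda>xs. nth0 xs 0 - 1)"
  proof -
    have "comp 1 (\<lambda>xs. rec_nat 0 (\<lambda>n y. (\<lambda>n y xs. n) n y xs) (nth0 xs 0))"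
      by (rule comp_rec) (auto intro: comp_nth0 comp_const)
    moreover have "rec_nat 0 (\<lambda>n y. n) a = a - 1" for a :: nat by (cases a) auto
    ultimately show ?thesis by (rule_tac comp_ext) auto
  qed
  have "comp 2 (\<lambda>xs. rec_nat (nth0 xs 0) (\<lambda>n y. (\<lambda>n y xs. y - 1) n y xs) (nth0 xs 1))"
    by (intro comp_rec comp_nth0 comp_comp1[OF pred comp_nth0])
  then show ?thesis by (rule comp_ext) (rule rec_sub)
qed

lemma comp_add: "comp m F \<Longrightarrow> comp m G \<Longrightarrow> comp m (\<lambda>xs. F xs + G xs)"
  by (rule comp_comp2[OF comp_add2])
lemma comp_mult: "comp m F \<Longrightarrow> comp m G \<Longrightarrow> comp m (\<lambda>xs. F xs * G xs)"
  by (rule comp_comp2[OF comp_mult2])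
lemma comp_sub: "comp m F \<Longrightarrow> comp m G \<Longrightarrow> comp m (\<lambda>xs. F xs - G xs)"
  by (rule comp_comp2[OF comp_sub2])
lemma comp_Suc: "comp m F \<Longrightarrow> comp m (\<lambda>xs. Suc (F xs))"
  by (rule comp_comp1[OF comp_succ])

definition compb :: "nat \<Rightarrow> (nat list \<Rightarrow> bool) \<Rightarrow> bool" where
  "compb m P \<longleftrightarrow> comp m (\<lambda>xs. if P xs then 1 else 0)"

lemma compb_less: "comp m F \<Longrightarrow> comp m G \<Longrightarrow> compb m (\<lambda>xs. F xs < G xs)"
proof -
  assume "comp m F" "comp m G"
  then have "comp m (\<lambda>xs. 1 - (1 - (G xs - F xs)))" by (intro comp_sub comp_const)
  then show ?thesis unfolding compb_def by (rule comp_ext) auto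
qed

lemma compb_not: "compb m P \<Longrightarrow> compb m (\<lambda>xs. \<not> P xs)"
proof -
  assume "compb m P"
  then have "comp m (\<lambda>xs. 1 - (if P xs then 1 else 0))" unfolding compb_def by (intro comp_sub comp_const)
  then show ?thesis unfolding compb_def by (rule comp_ext) auto
qed

lemma compb_and: "compb m P \<Longrightarrow> compb m Q \<Longrightarrow> compb m (\<lambda>xs. P xs \<and> Q xs)"
proof -
  assume "compb m P" "compb m Q"
  then have "comp m (\<lambda>xs. (if P xs then 1 else 0) * (if Q xs then 1 else 0))" unfolding compb_def by (intro comp_mult)
  then show ?thesis unfolding compb_def by (rule comp_ext) auto
qed

lemma compb_or: "compb m P \<Longrightarrow> compb m Q \<Longrightarrow> compb m (\<lambda>xs. P xs \<or> Q xs)"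
proof -
  assume "compb m P" "compb m Q"
  then have "compb m (\<lambda>xs. \<not> (\<not> P xs \<and> \<not> Q xs))" by (intro compb_not compb_and)
  then show ?thesis by (simp add: compb_def)
qed

lemma compb_le: "comp m F \<Longrightarrow> comp m G \<Longrightarrow> compb m (\<lambda>xs. F xs \<le> G xs)"
proof -
  assume "comp m F" "comp m G"
  then have "compb m (\<lambda>xs. \<not> G xs < F xs)" by (intro compb_not compb_less)
  then show ?thesis by (simp add: compb_def not_less)
qed

lemma compb_eq: "comp m F \<Longrightarrow> comp m G \<Longrightarrow> compb m (\<lambda>xs. F xs = G xs)"
proof -
  assume "comp m F" "comp m G"
  then have "compb m (\<lambda>xs. F xs \<le> G xs \<and> G xs \<le> F xs)" by (intro compb_and compb_le)
  then show ?thesis by (simp add: compb_def eq_iff)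
qed

lemma compb_const: "compb m (\<lambda>xs. b)"
  unfolding compb_def by (rule comp_const)

lemma compb_iff: "compb m P \<Longrightarrow> compb m Q \<Longrightarrow> compb m (\<lambda>xs. P xs = Q xs)"
proof -
  assume "compb m P" "compb m Q"
  then have "compb m (\<lambda>xs. (P xs \<and> Q xs) \<or> (\<not> P xs \<and> \<not> Q xs))" by (intro compb_or compb_and compb_not)
  then show ?thesis by (simp add: compb_def) (smt (verit, ccfv_SIG) comp_ext)
qed

lemma compb_imp: "compb m P \<Longrightarrow> compb m Q \<Longrightarrow> compb m (\<lambda>xs. P xs \<longrightarrow> Q xs)"
proof -
  assume "compb m P" "compb m Q"
  then have "compb m (\<lambda>xs. \<not> P xs \<or> Q xs)" by (intro compb_or compb_not)
  then show ?thesis by (simp add: compb_def)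
qed

lemma comp_if: "compb m P \<Longrightarrow> comp m F \<Longrightarrow> comp m G \<Longrightarrow> comp m (\<lambda>xs. if P xs then F xs else G xs)"
proof -
  assume "compb m P" "comp m F" "comp m G"
  then have "comp m (\<lambda>xs. (if P xs then 1 else 0) * F xs + (1 - (if P xs then 1 else 0)) * G xs)"
    unfolding compb_def by (intro comp_add comp_mult comp_sub comp_const)
  then show ?thesis by (rule comp_ext) auto
qed

lemma comp_least:
  assumes B: "comp m B" and P: "compb (Suc m) (\<lambda>ys. P (nth0 ys 0) (tl ys))"
  shows "comp m (\<lambda>xs. LEAST t. P t xs \<or> B xs \<le> t)"
proof -
  have "comp (Suc m) (\<lambda>ys. if P (nth0 ys 0) (tl ys) \<or> B (tl ys) \<le> nth0 ys 0 then 0 else 1)"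
    by (intro comp_if compb_or P compb_le comp_tl B comp_nth0 comp_const)
  then obtain f where f: "\<forall>ys. length ys = Suc m \<longrightarrow>
     evalr f ys (if P (nth0 ys 0) (tl ys) \<or> B (tl ys) \<le> nth0 ys 0 then 0 else 1)"
    unfolding comp_def by blast
  show ?thesis unfolding comp_def
  proof (intro exI allI impI)
    fix xs :: "nat list" assume l: "length xs = m"
    let ?r = "LEAST t. P t xs \<or> B xs \<le> t"
    have ex: "P (B xs) xs \<or> B xs \<le> B xs" by simp
    have r: "P ?r xs \<or> B xs \<le> ?r" by (rule LeastI[of _ "B xs"]) simp
    show "evalr (Mn f) xs ?r"
    proof (rule ev_Mn)
      show "evalr f (?r # xs) 0" using f[rule_format, of "?r # xs"] l r by simp
      show "\<forall>m<?r. \<exists>y. evalr f (m # xs) (Suc y)"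
      proof (intro allI impI)
        fix k assume "k < ?r"
        then have "\<not> (P k xs \<or> B xs \<le> k)" by (rule not_less_Least)
        then show "\<exists>y. evalr f (k # xs) (Suc y)" using f[rule_format, of "k # xs"] l
          by (intro exI[of _ 0]) simp
      qed
    qed
  qed
qed

lemma compb_ex:
  assumes B: "comp m B" and P: "compb (Suc m) (\<lambda>ys. P (nth0 ys 0) (tl ys))"
  shows "compb m (\<lambda>xs. \<exists>t<B xs. P t xs)"
proof -
  have "compb m (\<lambda>xs. (LEAST t. P t xs \<or> B xs \<le> t) < B xs)"
    by (intro compb_less comp_least B P)
  moreover have "((LEAST t. P t xs \<or> B xs \<le> t) < B xs) = (\<exists>t<B xs. P t xs)" for xs
  proof
    assume "(LEAST t. P t xs \<or> B xs \<le> t) < B xs"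
    moreover have "P (LEAST t. P t xs \<or> B xs \<le> t) xs \<or> B xs \<le> (LEAST t. P t xs \<or> B xs \<le> t)"
      by (rule LeastI[of _ "B xs"]) simp
    ultimately show "\<exists>t<B xs. P t xs" by auto
  next
    assume "\<exists>t<B xs. P t xs"
    then obtain t where "t < B xs" "P t xs" by blast
    then have "(LEAST t. P t xs \<or> B xs \<le> t) \<le> t" by (intro Least_le) simp
    then show "(LEAST t. P t xs \<or> B xs \<le> t) < B xs" using \<open>t < B xs\<close> by simp
  qed
  ultimately show ?thesis by (simp add: compb_def)
qed

lemma compb_all:
  assumes B: "comp m B" and P: "compb (Suc m) (\<lambda>ys. P (nth0 ys 0) (tl ys))"
  shows "compb m (\<lambda>xs. \<forall>t<B xs. P t xs)"
proof -
  have "compb m (\<lambda>xs. \<not> (\<exists>t<B xs. \<not> P t xs))"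
    by (intro compb_not compb_ex B P)
  then show ?thesis by (simp add: compb_def)
qed

lemma div_least: "(y::nat) > 0 \<Longrightarrow> x div y = (LEAST q. x < Suc q * y \<or> x \<le> q)"
proof -
  assume y: "y > 0"
  show ?thesis
  proof (rule Least_equality[symmetric])
    show "x < Suc (x div y) * y \<or> x \<le> x div y"
      using y by (metis div_mult_mod_eq mod_less_divisor add_less_mono1 mult_Suc add.commute disjI1 add_less_cancel_left)
    fix q assume "x < Suc q * y \<or> x \<le> q"
    then show "x div y \<le> q"
    proof
      assume "x < Suc q * y"
      then have "x div y < Suc q" using y by (simp add: div_less_iff_less_mult)
      then show ?thesis by simp
    next
      assume "x \<le> q" then show ?thesis using div_le_dividend order_trans by blast
    qed
  qed
qed

lemma comp_div: "comp m F \<Longrightarrow> comp m G \<Longrightarrow> comp m (\<lambda>xs. F xs div G xs)"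
proof -
  assume F: "comp m F" and G: "comp m G"
  have "comp m (\<lambda>xs. if G xs = 0 then 0 else (LEAST q. Suc q * G xs > F xs \<or> F xs \<le> q))"
    by (intro comp_if compb_eq G comp_const comp_least F compb_less comp_mult comp_Suc comp_nth0 comp_tl; simp)
  then show ?thesis by (rule comp_ext) (auto simp: div_least)
qed

lemma comp_mod: "comp m F \<Longrightarrow> comp m G \<Longrightarrow> comp m (\<lambda>xs. F xs mod G xs)"
proof -
  assume "comp m F" "comp m G"
  then have "comp m (\<lambda>xs. F xs - G xs * (F xs div G xs))" by (intro comp_sub comp_mult comp_div)
  then show ?thesis by (rule comp_ext) (simp add: minus_mult_div_eq_mod)
qed

lemma comp_pow: "comp m F \<Longrightarrow> comp m G \<Longrightarrow> comp m (\<lambda>xs. F xs ^ G xs)"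
proof -
  assume F: "comp m F" and G: "comp m G"
  have "comp m (\<lambda>xs. rec_nat 1 (\<lambda>n y. (\<lambda>n y xs. y * F xs) n y xs) (G xs))"
    by (intro comp_rec comp_const comp_mult comp_nth0 comp_tl[of m "\<lambda>xs. F (tl xs)", simplified] comp_tl F G)
  then show ?thesis by (rule comp_ext) (rule rec_pow)
qed

lemma compb_odd: "comp m F \<Longrightarrow> compb m (\<lambda>xs. odd (F xs))"
proof -
  assume F: "comp m F"
  have "compb m (\<lambda>xs. F xs mod 2 = 1)" by (intro compb_eq comp_mod F comp_const)
  then show ?thesis by (simp add: compb_def odd_iff_mod_2_eq_one)
qed



lemmas ci = comp_rec comp_least compb_ex compb_all comp_if compb_less compb_le compb_eq compb_not compb_and
  compb_or compb_iff compb_imp compb_odd compb_const comp_add comp_mult comp_sub comp_div comp_mod comp_pow comp_Suc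
  comp_nth0 comp_const

definition pfst :: "nat \<Rightarrow> nat" where
  "pfst c = (LEAST a. (\<exists>b<Suc c. prod_encode (a, b) = c) \<or> c \<le> a)"
definition psnd :: "nat \<Rightarrow> nat" where
  "psnd c = (LEAST b. (\<exists>a<Suc c. prod_encode (a, b) = c) \<or> c \<le> b)"

lemma pfst_eq: "pfst c = fst (prod_decode c)"
  unfolding pfst_def
proof (rule Least_equality)
  obtain a b where ab: "prod_decode c = (a, b)" by (cases "prod_decode c")
  then have e: "prod_encode (a, b) = c" by (metis prod_decode_inverse)
  have "b < Suc c" using le_prod_encode_2[where a=a and b=b] e by simp
  then show "(\<exists>b<Suc c. prod_encode (fst (prod_decode c), b) = c) \<or> c \<le> fst (prod_decode c)"
    using ab e by auto
  fix y assume "(\<exists>b<Suc c. prod_encode (y, b) = c) \<or> c \<le> y"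
  then show "fst (prod_decode c) \<le> y"
  proof
    assume "\<exists>b<Suc c. prod_encode (y, b) = c"
    then obtain b' where "prod_encode (y, b') = c" by blast
    then have "prod_decode c = (y, b')" by auto
    then show ?thesis by simp
  next
    assume "c \<le> y" then show ?thesis using le_prod_encode_1[where a=a and b=b] e ab by simp
  qed
qed

lemma psnd_eq: "psnd c = snd (prod_decode c)"
  unfolding psnd_def
proof (rule Least_equality)
  obtain a b where ab: "prod_decode c = (a, b)" by (cases "prod_decode c")
  then have e: "prod_encode (a, b) = c" by (metis prod_decode_inverse)
  have "a < Suc c" using le_prod_encode_1[where a=a and b=b] e by simp
  then show "(\<exists>a<Suc c. prod_encode (a, snd (prod_decode c)) = c) \<or> c \<le> snd (prod_decode c)"
    using ab e by auto
  fix y assume "(\<exists>a<Suc c. prod_encode (a, y) = c) \<or> c \<le> y"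
  then show "snd (prod_decode c) \<le> y"
  proof
    assume "\<exists>a<Suc c. prod_encode (a, y) = c"
    then obtain a' where "prod_encode (a', y) = c" by blast
    then have "prod_decode c = (a', y)" by auto
    then show ?thesis by simp
  next
    assume "c \<le> y" then show ?thesis using le_prod_encode_2[where a=a and b=b] e ab by simp
  qed
qed

lemma pe_alt: "prod_encode (a, b) = (a + b) * Suc (a + b) div 2 + a"
  by (simp add: prod_encode_def triangle_def)

lemma comp_pe: "comp m F \<Longrightarrow> comp m G \<Longrightarrow> comp m (\<lambda>xs. prod_encode (F xs, G xs))"
proof -
  have "comp 2 (\<lambda>xs. (nth0 xs 0 + nth0 xs 1) * Suc (nth0 xs 0 + nth0 xs 1) div 2 + nth0 xs 0)"
    by (intro ci)
  then have "comp 2 (\<lambda>xs. prod_encode (nth0 xs 0, nth0 xs 1))"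
    by (rule comp_ext) (simp only: pe_alt)
  then show "comp m F \<Longrightarrow> comp m G \<Longrightarrow> comp m (\<lambda>xs. prod_encode (F xs, G xs))"
    by (rule comp_comp2)
qed

lemmas ci2 = ci comp_pe

lemma comp_pfst: "comp m F \<Longrightarrow> comp m (\<lambda>xs. pfst (F xs))"
proof -
  have "comp 1 (\<lambda>xs. LEAST a. (\<exists>b<Suc (nth0 xs 0). prod_encode (a, b) = nth0 xs 0) \<or> nth0 xs 0 \<le> a)"
    by (intro ci2 | simp only: nth0_tl)+
  then have "comp 1 (\<lambda>xs. pfst (nth0 xs 0))" by (simp only: pfst_def)
  then show "comp m F \<Longrightarrow> comp m (\<lambda>xs. pfst (F xs))" by (rule comp_comp1)
qed


lemma comp_psnd: "comp m F \<Longrightarrow> comp m (\<lambda>xs. psnd (F xs))"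
proof -
  have "comp 1 (\<lambda>xs. LEAST b. (\<exists>a<Suc (nth0 xs 0). prod_encode (a, b) = nth0 xs 0) \<or> nth0 xs 0 \<le> b)"
    by (intro ci2 | simp only: nth0_tl)+
  then have "comp 1 (\<lambda>xs. psnd (nth0 xs 0))" by (simp only: psnd_def)
  then show "comp m F \<Longrightarrow> comp m (\<lambda>xs. psnd (F xs))" by (rule comp_comp1)
qed

definition tlc :: "nat \<Rightarrow> nat" where "tlc c = psnd (c - 1)"
definition hdc :: "nat \<Rightarrow> nat" where "hdc c = pfst (c - 1)"
definition itl :: "nat \<Rightarrow> nat \<Rightarrow> nat" where "itl t c = rec_nat c (\<lambda>n y. tlc y) t"
definition pv :: "nat \<Rightarrow> nat \<Rightarrow> nat" where "pv c t = hdc (itl t c)"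
definition lenc :: "nat \<Rightarrow> nat" where "lenc c = (LEAST t. itl t c = 0 \<or> c \<le> t)"

lemma comp_tlc: "comp m F \<Longrightarrow> comp m (\<lambda>xs. tlc (F xs))"
  unfolding tlc_def by (intro comp_psnd ci2)
lemma comp_hdc: "comp m F \<Longrightarrow> comp m (\<lambda>xs. hdc (F xs))"
  unfolding hdc_def by (intro comp_pfst ci2)

lemma comp_itl: "comp m F \<Longrightarrow> comp m G \<Longrightarrow> comp m (\<lambda>xs. itl (F xs) (G xs))"
proof -
  have "comp 2 (\<lambda>xs. rec_nat (nth0 xs 1) (\<lambda>n y. tlc y) (nth0 xs 0))"
    by (intro ci2 comp_tlc | simp only: nth0_tl)+
  then have "comp 2 (\<lambda>xs. itl (nth0 xs 0) (nth0 xs 1))" by (simp only: itl_def)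
  then show "comp m F \<Longrightarrow> comp m G \<Longrightarrow> comp m (\<lambda>xs. itl (F xs) (G xs))" by (rule comp_comp2)
qed

lemmas ci3 = ci2 comp_pfst comp_psnd comp_tlc comp_hdc comp_itl

lemma comp_pv: "comp m F \<Longrightarrow> comp m G \<Longrightarrow> comp m (\<lambda>xs. pv (F xs) (G xs))"
  unfolding pv_def by (intro ci3)

lemma comp_lenc: "comp m F \<Longrightarrow> comp m (\<lambda>xs. lenc (F xs))"
proof -
  have "comp 1 (\<lambda>xs. LEAST t. itl t (nth0 xs 0) = 0 \<or> nth0 xs 0 \<le> t)"
    by (intro ci3 | simp only: nth0_tl)+
  then have "comp 1 (\<lambda>xs. lenc (nth0 xs 0))" by (simp only: lenc_def)
  then show "comp m F \<Longrightarrow> comp m (\<lambda>xs. lenc (F xs))" by (rule comp_comp1)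
qed

lemma tlc_Suc[simp]: "tlc (Suc (prod_encode (x, y))) = y"
  by (simp add: tlc_def psnd_eq)
lemma hdc_Suc[simp]: "hdc (Suc (prod_encode (x, y))) = x"
  by (simp add: hdc_def pfst_eq)
lemma tlc_Cons: "tlc (list_encode (x # xs)) = list_encode xs"
  by simp
lemma hdc_Cons: "hdc (list_encode (x # xs)) = x"
  by simp
lemma tlc_0: "tlc 0 = 0"
  by (simp add: tlc_def psnd_eq prod_decode_def prod_decode_aux.simps)

lemma itl_le: "itl t (list_encode xs) = list_encode (drop t xs)"
proof (induction t)
  case 0 then show ?case by (simp add: itl_def)
next
  case (Suc t)
  have "itl (Suc t) (list_encode xs) = tlc (itl t (list_encode xs))" by (simp add: itl_def)
  also have "\<dots> = tlc (list_encode (drop t xs))" using Suc by simp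
  also have "\<dots> = list_encode (drop (Suc t) xs)"
  proof (cases "drop t xs")
    case Nil then show ?thesis by (simp add: tlc_0 drop_Suc tl_drop)
  next
    case (Cons y ys) then show ?thesis by (simp add: tlc_Cons drop_Suc tl_drop[symmetric])
  qed
  finally show ?case .
qed

lemma pv_le: "t < length xs \<Longrightarrow> pv (list_encode xs) t = xs ! t"
  by (simp add: pv_def itl_le Cons_nth_drop_Suc[symmetric] hdc_Cons)

lemma length_le_list_encode: "length xs \<le> list_encode xs"
proof (induction xs)
  case Nil then show ?case by simp
next
  case (Cons x xs)
  have "list_encode xs \<le> prod_encode (x, list_encode xs)" by (rule le_prod_encode_2)
  then show ?case using Cons by simp
qed

lemma lenc_le: "lenc (list_encode xs) = length xs"
  unfolding lenc_def
proof (rule Least_equality)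
  show "itl (length xs) (list_encode xs) = 0 \<or> list_encode xs \<le> length xs" by (simp add: itl_le)
  fix y assume "itl y (list_encode xs) = 0 \<or> list_encode xs \<le> y"
  then show "length xs \<le> y"
  proof
    assume "itl y (list_encode xs) = 0"
    then have "list_encode (drop y xs) = list_encode []" by (simp add: itl_le)
    then have "drop y xs = []" using list_encode_eq by blast
    then show ?thesis by simp
  next
    assume "list_encode xs \<le> y" then show ?thesis using length_le_list_encode[of xs] by simp
  qed
qed

lemma lenc_prefix: "lenc (prefix_code p k) = k"
  by (simp add: prefix_code_def lenc_le)
lemma pv_prefix: "t < k \<Longrightarrow> pv (prefix_code p k) t = p t"
  by (simp add: prefix_code_def pv_le)

definition ib :: "nat \<Rightarrow> nat \<Rightarrow> nat" where "ib t c = rec_nat c (\<lambda>n y. (y - 1) div 2) t"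
definition wb :: "nat \<Rightarrow> nat \<Rightarrow> bool" where "wb c t = even (ib t c)"
definition wlen :: "nat \<Rightarrow> nat" where "wlen c = (LEAST t. ib t c = 0 \<or> c \<le> t)"

lemma comp_ib: "comp m F \<Longrightarrow> comp m G \<Longrightarrow> comp m (\<lambda>xs. ib (F xs) (G xs))"
proof -
  have "comp 2 (\<lambda>xs. rec_nat (nth0 xs 1) (\<lambda>n y. (y - 1) div 2) (nth0 xs 0))"
    by (intro ci3 | simp only: nth0_tl)+
  then have "comp 2 (\<lambda>xs. ib (nth0 xs 0) (nth0 xs 1))" by (simp only: ib_def)
  then show "comp m F \<Longrightarrow> comp m G \<Longrightarrow> comp m (\<lambda>xs. ib (F xs) (G xs))" by (rule comp_comp2)
qed

lemma compb_even: "comp m F \<Longrightarrow> compb m (\<lambda>xs. even (F xs))"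
proof -
  assume "comp m F"
  then have "compb m (\<lambda>xs. \<not> odd (F xs))" by (intro compb_not compb_odd)
  then show ?thesis by simp
qed

lemma compb_wb: "comp m F \<Longrightarrow> comp m G \<Longrightarrow> compb m (\<lambda>xs. wb (F xs) (G xs))"
  unfolding wb_def by (intro compb_even comp_ib)

lemma comp_wlen: "comp m F \<Longrightarrow> comp m (\<lambda>xs. wlen (F xs))"
proof -
  have "comp 1 (\<lambda>xs. LEAST t. ib t (nth0 xs 0) = 0 \<or> nth0 xs 0 \<le> t)"
    by (intro ci3 comp_ib | simp only: nth0_tl)+
  then have "comp 1 (\<lambda>xs. wlen (nth0 xs 0))" by (simp only: wlen_def)
  then show "comp m F \<Longrightarrow> comp m (\<lambda>xs. wlen (F xs))" by (rule comp_comp1)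
qed

lemma bcode_step: "(bcode (b # w) - 1) div 2 = bcode w"
  by simp

lemma ib_bcode: "ib t (bcode w) = bcode (drop t w)"
proof (induction t)
  case 0 then show ?case by (simp add: ib_def)
next
  case (Suc t)
  have "ib (Suc t) (bcode w) = (ib t (bcode w) - 1) div 2" by (simp add: ib_def)
  also have "\<dots> = (bcode (drop t w) - 1) div 2" using Suc by simp
  also have "\<dots> = bcode (drop (Suc t) w)"
  proof (cases "drop t w")
    case Nil then show ?thesis by (simp add: drop_Suc tl_drop)
  next
    case (Cons y ys) then show ?thesis by (simp add: drop_Suc tl_drop[symmetric])
  qed
  finally show ?case .
qed

lemma wb_bcode: "t < length w \<Longrightarrow> wb (bcode w) t = w ! t"
  by (simp add: wb_def ib_bcode Cons_nth_drop_Suc[symmetric])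

lemma bcode_0_iff: "bcode w = 0 \<longleftrightarrow> w = []"
  by (cases w) auto

lemma length_le_bcode: "length w \<le> bcode w"
  by (induction w) auto

lemma wlen_bcode: "wlen (bcode w) = length w"
  unfolding wlen_def
proof (rule Least_equality)
  show "ib (length w) (bcode w) = 0 \<or> bcode w \<le> length w" by (simp add: ib_bcode)
  fix y assume "ib y (bcode w) = 0 \<or> bcode w \<le> y"
  then show "length w \<le> y"
  proof
    assume "ib y (bcode w) = 0"
    then have "drop y w = []" by (simp add: ib_bcode bcode_0_iff)
    then show ?thesis by simp
  next
    assume "bcode w \<le> y" then show ?thesis using length_le_bcode[of w] by simp
  qed
qed

lemma bcode_inj: "bcode v = bcode w \<Longrightarrow> v = w"
proof (induction v arbitrary: w)
  case Nil then show ?case by (simp add: bcode_0_iff)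
next
  case (Cons a v)
  then obtain b w' where w: "w = b # w'" by (cases w) (auto split: if_splits)
  have "2 * bcode v + (if a then 2 else 1) = 2 * bcode w' + (if b then 2 else 1)"
    using Cons.prems w by simp
  then have "a = b \<and> bcode v = bcode w'" by (cases a; cases b) presburger+
  then show ?case using Cons.IH w by simp
qed



definition k0 :: "nat \<Rightarrow> nat" where "k0 n = (LEAST k. Suc n \<le> 2 ^ k)"
definition donor :: "nat \<Rightarrow> (nat \<Rightarrow> nat \<Rightarrow> bool) \<Rightarrow> nat \<Rightarrow> nat" where
  "donor n al l = (LEAST m. al l m \<or> n \<le> m)"
definition stp :: "nat \<Rightarrow> (nat \<Rightarrow> nat \<Rightarrow> bool) \<Rightarrow> nat \<Rightarrow> nat \<Rightarrow> nat \<Rightarrow> nat" where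
  "stp n al j l s = (if k0 n \<le> l \<and> l mod Suc n = j \<and> \<not> al l (s mod Suc n)
                     then Suc l * Suc n + donor n al l else s)"
definition st :: "nat \<Rightarrow> (nat \<Rightarrow> nat \<Rightarrow> bool) \<Rightarrow> nat \<Rightarrow> nat \<Rightarrow> nat" where
  "st n al j L = rec_nat j (\<lambda>l s. stp n al j l s) L"
definition nb :: "nat \<Rightarrow> nat \<Rightarrow> nat \<Rightarrow> bool" where
  "nb n s t = ((t < k0 n \<and> odd (s mod Suc n div 2 ^ t)) \<or> s div Suc n = Suc t)"
definition node :: "nat \<Rightarrow> (nat \<Rightarrow> nat \<Rightarrow> bool) \<Rightarrow> nat \<Rightarrow> nat \<Rightarrow> bool list" where
  "node n al j L = map (nb n (st n al j L)) [0..<L]"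
definition Tr :: "nat \<Rightarrow> (nat \<Rightarrow> nat \<Rightarrow> bool) \<Rightarrow> bool list set" where
  "Tr n al = {w. \<exists>j\<le>n. w = take (length w) (node n al j (max (length w) (k0 n)))}"

lemma k0_prop: "Suc n \<le> 2 ^ k0 n"
proof -
  have "Suc n \<le> 2 ^ Suc n" by (induction n) auto
  then show ?thesis unfolding k0_def by (rule LeastI)
qed

lemma k0_le: "Suc n \<le> 2 ^ k \<Longrightarrow> k0 n \<le> k"
  unfolding k0_def by (rule Least_le)

lemma bits_eq:
  "(a::nat) < 2 ^ k \<Longrightarrow> b < 2 ^ k \<Longrightarrow> (\<forall>t<k. odd (a div 2 ^ t) = odd (b div 2 ^ t)) \<Longrightarrow> a = b"
proof (induction k arbitrary: a b)
  case 0 then show ?case by simp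
next
  case (Suc k)
  have h: "a div 2 < 2 ^ k" "b div 2 < 2 ^ k" using Suc.prems by auto
  have "\<forall>t<k. odd (a div 2 div 2 ^ t) = odd (b div 2 div 2 ^ t)"
  proof (intro allI impI)
    fix t assume "t < k"
    then have "odd (a div 2 ^ Suc t) = odd (b div 2 ^ Suc t)" using Suc.prems(3)[rule_format, of "Suc t"] by simp
    then show "odd (a div 2 div 2 ^ t) = odd (b div 2 div 2 ^ t)" by (simp add: div_mult2_eq)
  qed
  then have "a div 2 = b div 2" using Suc.IH h by blast
  moreover have "odd a = odd b" using Suc.prems(3)[rule_format, of 0] by simp
  ultimately show ?case by (metis div_mult_mod_eq odd_iff_mod_2_eq_one parity_cases)
qed

lemma st_0[simp]: "st n al j 0 = j" by (simp add: st_def)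
lemma st_Suc: "st n al j (Suc L) = stp n al j L (st n al j L)" by (simp add: st_def)

lemma st_cong: "(\<And>l m. l < L \<Longrightarrow> al l m = al' l m) \<Longrightarrow> st n al j L = st n al' j L"
proof (induction L)
  case 0 then show ?case by simp
next
  case (Suc L)
  have "st n al j L = st n al' j L" using Suc by simp
  moreover have "al L = al' L" using Suc.prems by auto
  ultimately show ?case by (simp add: st_Suc stp_def donor_def)
qed

lemma donor_le: "donor n al l \<le> n"
  unfolding donor_def by (rule Least_le) simp

lemma mod_div_code:
  assumes "d \<le> n" shows "(Suc l * Suc n + d) mod Suc n = d" "(Suc l * Suc n + d) div Suc n = Suc l"
proof -
  have e: "Suc l * Suc n + d = d + Suc l * Suc n" by simp
  have d: "d < Suc n" using assms by simp
  show "(Suc l * Suc n + d) mod Suc n = d" by (simp only: e mod_mult_self1) (simp add: d)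
  show "(Suc l * Suc n + d) div Suc n = Suc l" by (simp only: e div_mult_self1 Suc_not_Zero not_False_eq_True) (simp add: d)
qed

lemma stp_keep: "\<not> (k0 n \<le> l \<and> l mod Suc n = j \<and> \<not> al l (s mod Suc n)) \<Longrightarrow> stp n al j l s = s"
  unfolding stp_def by (rule if_not_P)
lemma stp_resp: "k0 n \<le> l \<and> l mod Suc n = j \<and> \<not> al l (s mod Suc n) \<Longrightarrow> stp n al j l s = Suc l * Suc n + donor n al l"
  unfolding stp_def by (rule if_P)

locale tc =
  fixes n :: nat and al :: "nat \<Rightarrow> nat \<Rightarrow> bool"
  assumes mono: "\<And>l m. al (Suc l) m \<Longrightarrow> al l m"
    and alive_ex: "\<exists>a\<le>n. \<forall>l. al l a"
begin

abbreviation "K \<equiv> k0 n"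
abbreviation "lab s \<equiv> s mod Suc n"
abbreviation "rsp s \<equiv> s div Suc n"

lemma mono_le: "al l m \<Longrightarrow> l' \<le> l \<Longrightarrow> al l' m"
proof (induction l)
  case 0 then show ?case by simp
next
  case (Suc l) then show ?case using mono by (cases "l' = Suc l") auto
qed

lemma donor_alive: "al l (donor n al l)"
proof -
  obtain a where a: "a \<le> n" "\<forall>l. al l a" using alive_ex by blast
  have "al l a \<or> n \<le> a" using a by blast
  then have "al l (donor n al l) \<or> n \<le> donor n al l" unfolding donor_def by (rule LeastI)
  then show ?thesis
  proof
    assume "n \<le> donor n al l"
    then have dn: "donor n al l = n" using donor_le[of n al l] by simp
    show ?thesis
    proof (cases "a = n")
      case True then show ?thesis using a dn by simp
    next
      case False
      then have "a < n" using a by simp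
      have "donor n al l \<le> a" unfolding donor_def by (rule Least_le) (use a in blast)
      then show ?thesis using dn \<open>a < n\<close> by simp
    qed
  qed simp
qed

lemma st_inv: "j \<le> n \<Longrightarrow> (rsp (st n al j L) = 0 \<and> lab (st n al j L) = j) \<or>
   (\<exists>l. rsp (st n al j L) = Suc l \<and> K \<le> l \<and> l < L \<and> l mod Suc n = j \<and> lab (st n al j L) = donor n al l)"
proof (induction L)
  case 0 then show ?case by simp
next
  case (Suc L)
  show ?case
  proof (cases "K \<le> L \<and> L mod Suc n = j \<and> \<not> al L (lab (st n al j L))")
    case True
    from True have "st n al j (Suc L) = Suc L * Suc n + donor n al L" unfolding st_Suc by (rule stp_resp)
    then show ?thesis using True mod_div_code[OF donor_le] by auto
  next
    case False
    then have "st n al j (Suc L) = st n al j L" unfolding st_Suc by (rule stp_keep)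
    then show ?thesis using Suc by auto
  qed
qed

lemma st_home: "j \<le> n \<Longrightarrow> (\<And>l. l < L \<Longrightarrow> al l j) \<Longrightarrow> st n al j L = j"
proof (induction L)
  case 0 then show ?case by simp
next
  case (Suc L)
  then have "st n al j L = j" by simp
  moreover have "al L j" using Suc.prems by simp
  ultimately show ?case using Suc.prems(1) by (simp add: st_Suc stp_keep)
qed

lemma length_node[simp]: "length (node n al j L) = L" by (simp add: node_def)

lemma nb_home: "d \<le> n \<Longrightarrow> nb n d t = (t < K \<and> odd (d div 2 ^ t))"
  by (simp add: nb_def)

lemma node_respawn:
  assumes j: "j \<le> n" and r: "K \<le> L" "L mod Suc n = j" "\<not> al L (lab (st n al j L))"
  shows "node n al j (Suc L) = node n al (donor n al L) L @ [True]"
    and "node n al (donor n al L) (Suc L) = node n al (donor n al L) L @ [False]"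
proof -
  let ?d = "donor n al L"
  have s: "st n al j (Suc L) = Suc L * Suc n + ?d" using conjI[OF r(1) conjI[OF r(2) r(3)]] unfolding st_Suc by (rule stp_resp)
  have dh: "st n al ?d M = ?d" if "M \<le> Suc L" for M
  proof (rule st_home)
    show "donor n al L \<le> n" by (rule donor_le)
    fix l assume "l < M"
    then have "l \<le> L" using that by simp
    then show "al l (donor n al L)" using mono_le donor_alive by blast
  qed
  have "nb n (st n al j (Suc L)) t = ((t < K \<and> odd (?d div 2 ^ t)) \<or> t = L)" for t
    unfolding s nb_def mod_div_code[OF donor_le] by auto
  then have nbs: "nb n (st n al j (Suc L)) = (\<lambda>t. (t < K \<and> odd (?d div 2 ^ t)) \<or> t = L)" by (rule ext)
  have nbd: "nb n (st n al ?d L) = (\<lambda>t. t < K \<and> odd (?d div 2 ^ t))"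
    using dh[of L] donor_le[of n al L] by (auto simp: nb_home)
  show "node n al j (Suc L) = node n al ?d L @ [True]"
    unfolding node_def nbs nbd by simp
  show "node n al ?d (Suc L) = node n al ?d L @ [False]"
    unfolding node_def using dh[of L] dh[of "Suc L"] donor_le[of n al L] r(1) by (simp add: nb_home)
qed

lemma node_keep:
  assumes "st n al j (Suc L) = st n al j L"
  shows "node n al j (Suc L) = node n al j L @ [nb n (st n al j L) L]"
  unfolding node_def using assms by simp

lemma node_prefix1: "j \<le> n \<Longrightarrow> \<exists>j'\<le>n. take L (node n al j (Suc L)) = node n al j' L"
proof (cases "K \<le> L \<and> L mod Suc n = j \<and> \<not> al L (lab (st n al j L))")
  case True
  assume "j \<le> n"
  then show ?thesis using node_respawn(1)[of j L] True donor_le[of n al L] by auto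
next
  case False
  assume j: "j \<le> n"
  from False have "st n al j (Suc L) = st n al j L" unfolding st_Suc by (rule stp_keep)
  then show ?thesis using node_keep j by auto
qed

lemma node_prefix: "j \<le> n \<Longrightarrow> L \<le> L' \<Longrightarrow> \<exists>j'\<le>n. take L (node n al j L') = node n al j' L"
proof (induction L' arbitrary: j)
  case 0 then show ?case by (auto simp: node_def)
next
  case (Suc L')
  show ?case
  proof (cases "L = Suc L'")
    case True then show ?thesis using Suc.prems by auto
  next
    case False
    then have "L \<le> L'" using Suc.prems by simp
    obtain j1 where j1: "j1 \<le> n" "take L' (node n al j (Suc L')) = node n al j1 L'"
      using node_prefix1 Suc.prems by blast
    obtain j2 where j2: "j2 \<le> n" "take L (node n al j1 L') = node n al j2 L"
      using Suc.IH j1(1) \<open>L \<le> L'\<close> by blast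
    have "take L (node n al j (Suc L')) = take L (take L' (node n al j (Suc L')))"
      using \<open>L \<le> L'\<close> by (simp add: min_def)
    then show ?thesis using j1 j2 by auto
  qed
qed

lemma nb_low: "j \<le> n \<Longrightarrow> t < K \<Longrightarrow> nb n (st n al j L) t = odd (lab (st n al j L) div 2 ^ t)"
  using st_inv[of j L] unfolding nb_def by auto

lemma lab_lt: "lab s < 2 ^ K"
  using k0_prop[of n] by (meson mod_less_divisor zero_less_Suc order_less_le_trans)

lemma nb_high: "K \<le> t \<Longrightarrow> nb n s t = (s div Suc n = Suc t)"
  unfolding nb_def by simp

lemma node_inj:
  assumes j: "j \<le> n" "j' \<le> n" and L: "K \<le> L" and e: "node n al j L = node n al j' L"
  shows "j = j'"
proof -
  let ?s = "st n al j L" and ?s' = "st n al j' L"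
  have bits: "nb n ?s t = nb n ?s' t" if "t < L" for t
    using arg_cong[OF e, of "\<lambda>xs. xs ! t"] that by (simp add: node_def)
  have "\<forall>t<K. odd (lab ?s div 2 ^ t) = odd (lab ?s' div 2 ^ t)"
  proof (intro allI impI)
    fix t assume t: "t < K"
    then have "t < L" using L by simp
    have "odd (lab ?s div 2 ^ t) = nb n ?s t" using nb_low[OF j(1) t] by simp
    also have "\<dots> = nb n ?s' t" using bits \<open>t < L\<close> by simp
    also have "\<dots> = odd (lab ?s' div 2 ^ t)" using nb_low[OF j(2) t] by simp
    finally show "odd (lab ?s div 2 ^ t) = odd (lab ?s' div 2 ^ t)" .
  qed
  then have labeq: "lab ?s = lab ?s'" by (rule bits_eq[OF lab_lt lab_lt])
  have rs: "rsp ?s = Suc t \<longleftrightarrow> rsp ?s' = Suc t" if "K \<le> t" "t < L" for t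
    using bits[OF that(2)] unfolding nb_high[OF that(1)] .
  obtain r r' a a' where rr: "rsp ?s = r" "rsp ?s' = r'" "lab ?s = a" "lab ?s' = a'" by simp
  have rs': "(r = Suc t) = (r' = Suc t)" if "K \<le> t" "t < L" for t
    using rs[OF that] unfolding rr .
  have ae: "a = a'" using labeq unfolding rr .
  have i1: "(r = 0 \<and> a = j) \<or> (\<exists>l. r = Suc l \<and> K \<le> l \<and> l < L \<and> l mod Suc n = j)"
    using st_inv[OF j(1), of L] unfolding rr by blast
  have i2: "(r' = 0 \<and> a' = j') \<or> (\<exists>l. r' = Suc l \<and> K \<le> l \<and> l < L \<and> l mod Suc n = j')"
    using st_inv[OF j(2), of L] unfolding rr by blast
  from i1 i2 show ?thesis
  proof (elim disjE exE conjE)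
    assume "r = 0" "a = j" "r' = 0" "a' = j'"
    then show ?thesis using ae by simp
  next
    fix l assume "r = 0" "r' = Suc l" "K \<le> l" "l < L"
    then show ?thesis using rs'[of l] by simp
  next
    fix l assume "r' = 0" "r = Suc l" "K \<le> l" "l < L"
    then show ?thesis using rs'[of l] by simp
  next
    fix l l' assume a: "r = Suc l" "K \<le> l" "l < L" "l mod Suc n = j"
      "r' = Suc l'" "l' mod Suc n = j'"
    then have "l = l'" using rs'[of l] by simp
    then show ?thesis using a by simp
  qed
qed

lemma Tr_level: "K \<le> k \<Longrightarrow> {w \<in> Tr n al. length w = k} = (\<lambda>j. node n al j k) ` {..n}"
proof (rule set_eqI)
  fix w assume k: "K \<le> k"
  then have mk: "max k K = k" by simp
  show "w \<in> {w \<in> Tr n al. length w = k} \<longleftrightarrow> w \<in> (\<lambda>j. node n al j k) ` {..n}"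
  proof
    assume "w \<in> {w \<in> Tr n al. length w = k}"
    then obtain j where "j \<le> n" "w = take k (node n al j k)" "length w = k"
      unfolding Tr_def using mk by auto
    then show "w \<in> (\<lambda>j. node n al j k) ` {..n}" by simp
  next
    assume "w \<in> (\<lambda>j. node n al j k) ` {..n}"
    then obtain j where "j \<le> n" "w = node n al j k" by auto
    then show "w \<in> {w \<in> Tr n al. length w = k}" unfolding Tr_def using mk by auto
  qed
qed

lemma Tr_card: "Suc n \<le> 2 ^ k \<Longrightarrow> card {w \<in> Tr n al. length w = k} = Suc n"
proof -
  assume "Suc n \<le> 2 ^ k"
  then have k: "K \<le> k" by (rule k0_le)
  have "inj_on (\<lambda>j. node n al j k) {..n}"
  proof (rule inj_onI)
    fix j j' assume "j \<in> {..n}" "j' \<in> {..n}" "node n al j k = node n al j' k"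
    then show "j = j'" using node_inj[of j j' k] k by simp
  qed
  then show ?thesis using Tr_level[OF k] by (simp add: card_image)
qed

lemma Tr_tree: "is_tree (Tr n al)"
  unfolding is_tree_def
proof (intro allI impI)
  fix w v assume "w @ v \<in> Tr n al"
  then obtain j where j: "j \<le> n" "w @ v = take (length (w @ v)) (node n al j (max (length (w @ v)) K))"
    unfolding Tr_def by blast
  let ?L1 = "max (length w) K" and ?L2 = "max (length (w @ v)) K"
  have "?L1 \<le> ?L2" by auto
  then obtain j' where j': "j' \<le> n" "take ?L1 (node n al j ?L2) = node n al j' ?L1"
    using node_prefix j(1) by blast
  have "w = take (length w) (w @ v)" by simp
  also have "\<dots> = take (length w) (node n al j ?L2)" using j(2) by (metis take_take min.absorb1 le_add1 length_append)
  also have "\<dots> = take (length w) (take ?L1 (node n al j ?L2))" by (simp add: min_def)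
  also have "\<dots> = take (length w) (node n al j' ?L1)" using j' by simp
  finally show "w \<in> Tr n al" unfolding Tr_def using j'(1) by blast
qed

end


lemma lt_div_succ: "(b::nat) > 0 \<Longrightarrow> x < (x div b + 1) * b"
proof -
  assume b: "b > 0"
  have e: "x = x div b * b + x mod b" by simp
  have m: "x mod b < b" using b by simp
  have f: "(x div b + 1) * b = x div b * b + b" by (simp add: distrib_right)
  show ?thesis using e m f by linarith
qed

context tc begin

definition "Alv = {m. m \<le> n \<and> (\<forall>l. al l m)}"

lemma ev_const: "\<exists>S. \<forall>l\<ge>S. \<forall>m\<le>n. al l m = al S m"
proof -
  have "\<forall>m. \<exists>Sm. \<forall>l\<ge>Sm. al l m = al Sm m"
  proof
    fix m show "\<exists>Sm. \<forall>l\<ge>Sm. al l m = al Sm m"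
    proof (cases "\<forall>l. al l m")
      case True then show ?thesis by auto
    next
      case False
      then obtain l0 where l0: "\<not> al l0 m" by blast
      have "\<forall>l\<ge>l0. al l m = al l0 m" using l0 mono_le by blast
      then show ?thesis by blast
    qed
  qed
  from choice[OF this] obtain f where f: "\<forall>m. \<forall>l\<ge>f m. al l m = al (f m) m" by blast
  define S where "S = (\<Sum>m\<le>n. f m)"
  have fS: "f m \<le> S" if "m \<le> n" for m
    unfolding S_def using that by (intro member_le_sum) auto
  show ?thesis
  proof (intro exI allI impI)
    fix l m assume "S \<le> l" "m \<le> n"
    then have "f m \<le> l" "f m \<le> S" using fS by (auto intro: order_trans)
    then have "al l m = al (f m) m" "al S m = al (f m) m" using f by blast+
    then show "al l m = al S m" by simp
  qed
qed

definition "S0 = (SOME S. \<forall>l\<ge>S. \<forall>m\<le>n. al l m = al S m)"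

lemma S0: "S0 \<le> l \<Longrightarrow> m \<le> n \<Longrightarrow> al l m = al S0 m"
  using someI_ex[OF ev_const] unfolding S0_def by blast

lemma alive_after: "S0 \<le> l \<Longrightarrow> m \<le> n \<Longrightarrow> al l m \<Longrightarrow> m \<in> Alv"
proof -
  assume a: "S0 \<le> l" "m \<le> n" "al l m"
  have "al l' m" for l'
  proof (cases "S0 \<le> l'")
    case True then show ?thesis using S0[OF True a(2)] S0[OF a(1) a(2)] a(3) by simp
  next
    case False
    have "al S0 m" using S0[OF a(1) a(2)] a(3) by simp
    then show ?thesis using False mono_le by simp
  qed
  then show ?thesis unfolding Alv_def using a(2) by blast
qed

definition "E0 = max S0 K"
definition "D0 = (E0 div Suc n + 2) * Suc n"

lemma settle:
  assumes j: "j \<le> n"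
  shows "\<forall>L\<ge>D0. st n al j L = st n al j D0 \<and> lab (st n al j L) \<in> Alv"
proof -
  define q where "q = E0 div Suc n"
  define lj where "lj = (q + 1) * Suc n + j"
  have Elj: "E0 \<le> lj"
  proof -
    have "E0 < (q + 1) * Suc n" unfolding q_def by (rule lt_div_succ) simp
    then show ?thesis unfolding lj_def by simp
  qed
  have lje: "lj = j + (q + 1) * Suc n" unfolding lj_def by simp
  have "lj mod Suc n = j mod Suc n" unfolding lje by (rule mod_mult_self1)
  also have "\<dots> = j" using j by (intro mod_less) simp
  finally have ljm: "lj mod Suc n = j" .
  have SK: "S0 \<le> lj" "K \<le> lj" using Elj unfolding E0_def by auto
  have c: "lab (st n al j (Suc lj)) \<in> Alv"
  proof (cases "al lj (lab (st n al j lj))")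
    case True
    then have "st n al j (Suc lj) = st n al j lj"
      unfolding st_Suc by (intro stp_keep) simp
    then show ?thesis using alive_after[OF SK(1) _ True] by simp
  next
    case False
    then have "st n al j (Suc lj) = Suc lj * Suc n + donor n al lj"
      unfolding st_Suc using SK(2) ljm by (intro stp_resp) simp
    then have "lab (st n al j (Suc lj)) = donor n al lj"
      using mod_div_code(1)[OF donor_le] by simp
    then show ?thesis using alive_after[OF SK(1) donor_le donor_alive] by simp
  qed
  have d: "st n al j L = st n al j (Suc lj)" if "Suc lj \<le> L" for L
    using that
  proof (induction L)
    case 0 then show ?case by simp
  next
    case (Suc L)
    show ?case
    proof (cases "Suc lj = Suc L")
      case True then show ?thesis by simp
    next
      case False
      then have IH: "st n al j L = st n al j (Suc lj)" using Suc by simp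
      then have "al L (lab (st n al j L))" using c unfolding Alv_def by simp
      then have "st n al j (Suc L) = st n al j L" unfolding st_Suc by (intro stp_keep) simp
      then show ?thesis using IH by simp
    qed
  qed
  have D0q: "D0 = (q + 2) * Suc n" unfolding D0_def q_def by (rule refl)
  have "Suc lj \<le> (q + 2) * Suc n" unfolding lj_def using j by simp
  then have "Suc lj \<le> D0" unfolding D0q .
  show ?thesis
  proof (intro allI impI)
    fix L assume "D0 \<le> L"
    then have "Suc lj \<le> L" using \<open>Suc lj \<le> D0\<close> by simp
    then have e1: "st n al j L = st n al j (Suc lj)" by (rule d)
    have e2: "st n al j D0 = st n al j (Suc lj)" using \<open>Suc lj \<le> D0\<close> by (rule d)
    show "st n al j L = st n al j D0 \<and> lab (st n al j L) \<in> Alv" using e1 e2 c by simp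
  qed
qed

lemma K_le_D0: "K \<le> D0"
proof -
  obtain q where q: "q = E0 div Suc n" by simp
  have "E0 < (q + 1) * Suc n" unfolding q by (rule lt_div_succ) simp
  moreover have "D0 = (q + 2) * Suc n" unfolding D0_def q by (rule refl)
  moreover have "K \<le> E0" unfolding E0_def by simp
  moreover have "(q + 1) * Suc n \<le> (q + 2) * Suc n" by simp
  ultimately show ?thesis by linarith
qed

lemma unary: "w \<in> Tr n al \<Longrightarrow> D0 \<le> length w \<Longrightarrow> card {b. w @ [b] \<in> Tr n al} = 1"
proof -
  assume w: "w \<in> Tr n al" "D0 \<le> length w"
  let ?L = "length w"
  have KL: "K \<le> ?L" using w(2) K_le_D0 by simp
  then obtain j where j: "j \<le> n" "w = node n al j ?L"
    using Tr_level[OF KL] w(1) by blast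
  let ?b = "nb n (st n al j ?L) ?L"
  have keep: "st n al j' (Suc ?L) = st n al j' ?L" if "j' \<le> n" for j'
  proof -
    have "D0 \<le> Suc ?L" using w(2) by simp
    then have "st n al j' (Suc ?L) = st n al j' D0" using settle[OF that] by blast
    moreover have "st n al j' ?L = st n al j' D0" using settle[OF that] w(2) by blast
    ultimately show ?thesis by simp
  qed
  have "{b. w @ [b] \<in> Tr n al} = {?b}"
  proof (rule set_eqI, rule iffI)
    fix b assume "b \<in> {b. w @ [b] \<in> Tr n al}"
    then have "w @ [b] \<in> {v \<in> Tr n al. length v = Suc ?L}" by simp
    then obtain j' where j': "j' \<le> n" "w @ [b] = node n al j' (Suc ?L)"
      using Tr_level[of "Suc ?L"] KL by auto
    then have "w @ [b] = node n al j' ?L @ [nb n (st n al j' ?L) ?L]"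
      using node_keep[OF keep[OF j'(1)]] by simp
    then have "node n al j' ?L = node n al j ?L" "b = nb n (st n al j' ?L) ?L" using j by auto
    then have "j' = j" "b = nb n (st n al j' ?L) ?L" using node_inj[OF j'(1) j(1) KL] by auto
    then show "b \<in> {?b}" by simp
  next
    fix b assume "b \<in> {?b}"
    then have "w @ [b] = node n al j (Suc ?L)" using node_keep[OF keep[OF j(1)]] j by simp
    moreover have "node n al j (Suc ?L) \<in> {v \<in> Tr n al. length v = Suc ?L}"
      using Tr_level[of "Suc ?L"] KL j(1) by auto
    ultimately show "b \<in> {b. w @ [b] \<in> Tr n al}" by simp
  qed
  then show ?thesis by simp
qed

lemma Tr_width: "width_tree (Suc n) (Tr n al)"
  unfolding width_tree_def using Tr_card unary by blast

lemma paths_label: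
  assumes x: "x \<in> paths (Tr n al)"
  shows "(LEAST i. (\<forall>t<K. x t = odd (i div 2 ^ t)) \<or> n \<le> i) \<in> Alv"
proof -
  have "map x [0..<D0] \<in> Tr n al" using x unfolding paths_def by blast
  then have "map x [0..<D0] \<in> {w \<in> Tr n al. length w = D0}" by simp
  then obtain j where j: "j \<le> n" "map x [0..<D0] = node n al j D0"
    using Tr_level[OF K_le_D0] by blast
  let ?m = "lab (st n al j D0)"
  have mA: "?m \<in> Alv" using settle[OF j(1)] by blast
  have xb: "x t = odd (?m div 2 ^ t)" if "t < K" for t
  proof -
    have "t < D0" using that K_le_D0 by simp
    then have "x t = node n al j D0 ! t" using arg_cong[OF j(2), of "\<lambda>xs. xs ! t"] by simp
    also have "\<dots> = nb n (st n al j D0) t" using \<open>t < D0\<close> by (simp add: node_def)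
    also have "\<dots> = odd (?m div 2 ^ t)" by (rule nb_low[OF j(1) that])
    finally show ?thesis .
  qed
  have mn: "?m \<le> n" using mA unfolding Alv_def by blast
  have "(LEAST i. (\<forall>t<K. x t = odd (i div 2 ^ t)) \<or> n \<le> i) = ?m"
  proof (rule Least_equality)
    show "(\<forall>t<K. x t = odd (?m div 2 ^ t)) \<or> n \<le> ?m" using xb by blast
    fix y assume y: "(\<forall>t<K. x t = odd (y div 2 ^ t)) \<or> n \<le> y"
    show "?m \<le> y"
    proof (rule ccontr)
      assume "\<not> ?m \<le> y"
      then have ym: "y < ?m" by simp
      have "\<not> n \<le> y" using ym mn by linarith
      then have "\<forall>t<K. x t = odd (y div 2 ^ t)" using y by blast
      then have bb: "\<forall>t<K. odd (y div 2 ^ t) = odd (?m div 2 ^ t)" using xb by simp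
      have y2: "y < 2 ^ K" by (rule less_trans[OF ym lab_lt])
      have "y = ?m" by (rule bits_eq[OF y2 lab_lt bb])
      then show False using ym by linarith
    qed
  qed
  then show ?thesis using mA by simp
qed

end


context tc begin
lemma node_in_Tr: "j \<le> n \<Longrightarrow> K \<le> L \<Longrightarrow> node n al j L \<in> Tr n al"
  using Tr_level[of L] by auto

lemma paths_ne: "nb n (st n al 0 D0) \<in> paths (Tr n al)"
  unfolding paths_def
proof (intro CollectI allI)
  fix k
  let ?s = "st n al 0 D0"
  have sD: "st n al 0 L = ?s" if "D0 \<le> L" for L using settle[of 0] that by blast
  have nd: "node n al 0 L = map (nb n ?s) [0..<L]" if "D0 \<le> L" for L
    unfolding node_def sD[OF that] ..
  let ?M = "max k D0"
  have "D0 \<le> ?M" by simp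
  have m: "map (nb n ?s) [0..<?M] \<in> Tr n al"
    using node_in_Tr[of 0 ?M] K_le_D0 nd[OF \<open>D0 \<le> ?M\<close>] by simp
  have tk: "take k (map (nb n ?s) [0..<?M]) = map (nb n ?s) [0..<k]"
    by (simp add: take_map)
  have tr: "\<forall>w v. w @ v \<in> Tr n al \<longrightarrow> w \<in> Tr n al" using Tr_tree unfolding is_tree_def .
  have "take k (map (nb n ?s) [0..<?M]) @ drop k (map (nb n ?s) [0..<?M]) \<in> Tr n al"
    using m by simp
  then have "take k (map (nb n ?s) [0..<?M]) \<in> Tr n al" using tr by blast
  then show "map (nb n ?s) [0..<k] \<in> Tr n al" unfolding tk .
qed
end

lemma comp_max: "comp m F \<Longrightarrow> comp m G \<Longrightarrow> comp m (\<lambda>xs. max (F xs) (G xs))"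
proof -
  assume "comp m F" "comp m G"
  then have "comp m (\<lambda>xs. if F xs \<le> G xs then G xs else F xs)" by (intro comp_if compb_le)
  then show ?thesis by (simp add: max_def)
qed

definition alp :: "nat \<Rightarrow> nat \<Rightarrow> nat \<Rightarrow> bool" where
  "alp pc l m = (\<not> (\<exists>t<l. pv pc t = Suc m))"
definition memb :: "nat \<Rightarrow> nat \<Rightarrow> nat \<Rightarrow> bool" where
  "memb n pc c = (\<exists>j<Suc n. \<forall>t<wlen c. wb c t = nb n (st n (alp pc) j (max (wlen c) (k0 n))) t)"
definition Hf :: "nat \<Rightarrow> nat \<Rightarrow> nat \<Rightarrow> nat" where
  "Hf n c pc = (if lenc pc \<le> c + k0 n then 0 else Suc (if memb n pc c then 1 else 0))"
definition Kdec :: "nat \<Rightarrow> nat \<Rightarrow> nat" where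
  "Kdec n qc = (LEAST i. (\<forall>t<k0 n. (pv qc t = 1) = odd (i div 2 ^ t)) \<or> n \<le> i)"
definition Kf :: "nat \<Rightarrow> nat \<Rightarrow> nat \<Rightarrow> nat" where
  "Kf n a qc = (if a = 0 then (if lenc qc < k0 n then 0 else Suc (Kdec n qc)) else 1)"

lemmas ci4 = ci3 comp_pv comp_lenc comp_ib compb_wb comp_wlen comp_max

lemma comp_donor: "comp m F \<Longrightarrow> comp m G \<Longrightarrow> comp m (\<lambda>xs. donor n (alp (F xs)) (G xs))"
proof -
  have "comp 2 (\<lambda>xs. donor n (alp (nth0 xs 0)) (nth0 xs 1))"
    unfolding donor_def alp_def
    by (intro ci4 | simp only: nth0_tl)+
  then show "comp m F \<Longrightarrow> comp m G \<Longrightarrow> comp m (\<lambda>xs. donor n (alp (F xs)) (G xs))"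
    by (rule comp_comp2)
qed

lemma compb_alp: "comp m F \<Longrightarrow> comp m G \<Longrightarrow> comp m H \<Longrightarrow> compb m (\<lambda>xs. alp (F xs) (G xs) (H xs))"
proof -
  have "compb 3 (\<lambda>xs. alp (nth0 xs 0) (nth0 xs 1) (nth0 xs 2))"
    unfolding alp_def
    by (intro ci4 | simp only: nth0_tl)+
  then show "comp m F \<Longrightarrow> comp m G \<Longrightarrow> comp m H \<Longrightarrow> compb m (\<lambda>xs. alp (F xs) (G xs) (H xs))"
    unfolding compb_def by (rule comp_comp3)
qed

lemma comp_st: "comp m F \<Longrightarrow> comp m G \<Longrightarrow> comp m H \<Longrightarrow> comp m (\<lambda>xs. st n (alp (F xs)) (G xs) (H xs))"
proof -
  have "comp 3 (\<lambda>xs. st n (alp (nth0 xs 0)) (nth0 xs 1) (nth0 xs 2))"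
    unfolding st_def stp_def
    by (intro ci4 comp_donor compb_alp | simp only: nth0_tl)+
  then show "comp m F \<Longrightarrow> comp m G \<Longrightarrow> comp m H \<Longrightarrow> comp m (\<lambda>xs. st n (alp (F xs)) (G xs) (H xs))"
    by (rule comp_comp3)
qed

lemma compb_nb: "comp m F \<Longrightarrow> comp m G \<Longrightarrow> compb m (\<lambda>xs. nb n (F xs) (G xs))"
proof -
  have "compb 2 (\<lambda>xs. nb n (nth0 xs 0) (nth0 xs 1))"
    unfolding nb_def
    by (intro ci4 | simp only: nth0_tl)+
  then show "comp m F \<Longrightarrow> comp m G \<Longrightarrow> compb m (\<lambda>xs. nb n (F xs) (G xs))"
    unfolding compb_def by (rule comp_comp2)
qed

lemma comp_Hf: "comp 2 (\<lambda>xs. Hf n (nth0 xs 0) (nth0 xs 1))"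
  unfolding Hf_def memb_def
  apply (intro ci4 comp_st compb_nb)
  apply (simp_all only: nth0_tl)
  apply (intro ci4)+
  done

lemma comp_Kf: "comp 2 (\<lambda>xs. Kf n (nth0 xs 0) (nth0 xs 1))"
  unfolding Kf_def Kdec_def
  by (intro ci4 | simp only: nth0_tl)+



definition alP :: "(nat \<Rightarrow> nat) \<Rightarrow> nat \<Rightarrow> nat \<Rightarrow> bool" where
  "alP p l m = (\<not> (\<exists>t<l. p t = Suc m))"
definition rH :: "nat \<Rightarrow> (nat \<Rightarrow> nat) \<Rightarrow> nat \<Rightarrow> nat" where
  "rH n p c = (if memb n (prefix_code p (Suc (c + k0 n))) c then 1 else 0)"
definition sK :: "nat \<Rightarrow> (nat \<Rightarrow> nat) \<Rightarrow> nat \<Rightarrow> nat" where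
  "sK n q a = (if a = 0 then Kdec n (prefix_code q (k0 n)) else 0)"

lemma tc_alP:
  assumes "delta_fin_closed n p = Some A" "A \<noteq> {}"
  shows "tc n (alP p)"
proof
  fix l m assume "alP p (Suc l) m" then show "alP p l m" unfolding alP_def by auto
next
  from assms obtain a where "a \<in> A" by blast
  moreover have "A = {k. k \<le> n \<and> (\<forall>i. p i \<noteq> Suc k)}"
    using assms(1) unfolding delta_fin_closed_def by (auto split: if_splits)
  ultimately show "\<exists>a\<le>n. \<forall>l. alP p l a" unfolding alP_def by blast
qed

lemma Alv_sub:
  assumes "delta_fin_closed n p = Some A" "A \<noteq> {}" "m \<in> tc.Alv n (alP p)"
  shows "m \<in> A"
proof -
  interpret tc n "alP p" using assms(1,2) by (rule tc_alP)
  have A: "A = {k. k \<le> n \<and> (\<forall>i. p i \<noteq> Suc k)}"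
    using assms(1) unfolding delta_fin_closed_def by (auto split: if_splits)
  have m: "m \<le> n" "\<forall>l. alP p l m" using assms(3) unfolding Alv_def by auto
  have "p i \<noteq> Suc m" for i using m(2)[rule_format, of "Suc i"] unfolding alP_def by blast
  then show ?thesis using A m(1) by blast
qed

lemma ex_cong_aux: "(\<And>t. t < l \<Longrightarrow> f t = g t) \<Longrightarrow>
  (\<exists>j<N. \<forall>t<l. f t = X j t) = (\<exists>j<N. \<forall>t<l. g t = X j t)"
  by auto

lemma take_map_eq_aux:
  assumes "length w \<le> L" shows "(w = take (length w) (map f [0..<L])) = (\<forall>t<length w. w ! t = f t)"
proof -
  have "take (length w) (map f [0..<L]) = map f [0..<length w]" using assms by (simp add: take_map min_def)
  moreover have "(w = map f [0..<length w]) = (\<forall>t<length w. w ! t = f t)"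
  proof
    assume e: "w = map f [0..<length w]"
    show "\<forall>t<length w. w ! t = f t"
    proof (intro allI impI)
      fix t assume "t < length w"
      then show "w ! t = f t" using arg_cong[OF e, of "\<lambda>xs. xs ! t"] by simp
    qed
  next
    assume "\<forall>t<length w. w ! t = f t"
    then show "w = map f [0..<length w]" by (intro nth_equalityI) auto
  qed
  ultimately show ?thesis by simp
qed

lemma memb_correct:
  assumes k: "max (length w) (k0 n) \<le> k"
  shows "memb n (prefix_code p k) (bcode w) = (w \<in> Tr n (alP p))"
proof -
  let ?L = "max (length w) (k0 n)"
  have stc: "st n (alp (prefix_code p k)) j ?L = st n (alP p) j ?L" for j
  proof (rule st_cong)
    fix l m assume "l < ?L"
    then have "\<forall>t<l. pv (prefix_code p k) t = p t" using k pv_prefix by auto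
    then show "alp (prefix_code p k) l m = alP p l m" unfolding alp_def alP_def by auto
  qed
  have "memb n (prefix_code p k) (bcode w) =
        (\<exists>j<Suc n. \<forall>t<length w. wb (bcode w) t = nb n (st n (alP p) j ?L) t)"
    by (simp only: memb_def wlen_bcode stc)
  also have "\<dots> = (\<exists>j<Suc n. \<forall>t<length w. w ! t = nb n (st n (alP p) j ?L) t)"
    by (rule ex_cong_aux) (rule wb_bcode)
  also have "\<dots> = (\<exists>j<Suc n. w = take (length w) (node n (alP p) j ?L))"
  proof -
    have "length w \<le> ?L" by simp
    then have eq: "(w = take (length w) (node n (alP p) j ?L)) = (\<forall>t<length w. w ! t = nb n (st n (alP p) j ?L) t)" for j
      unfolding node_def by (rule take_map_eq_aux)
    show ?thesis unfolding eq ..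
  qed
  also have "\<dots> = (\<exists>j\<le>n. w = take (length w) (node n (alP p) j ?L))"
    by (simp only: less_Suc_eq_le)
  also have "\<dots> = (w \<in> Tr n (alP p))" by (simp only: Tr_def mem_Collect_eq)
  finally show ?thesis .
qed

lemma part1: "sW_le (delta_fin_closed n) (delta_fin n) C_fin delta_tree delta_cantor (C_width (Suc n))"
proof -
  obtain fH where fH: "\<forall>xs. length xs = 2 \<longrightarrow> evalr fH xs (Hf n (nth0 xs 0) (nth0 xs 1))"
    using comp_Hf[of n] unfolding comp_def by blast
  obtain fK where fK: "\<forall>xs. length xs = 2 \<longrightarrow> evalr fK xs (Kf n (nth0 xs 0) (nth0 xs 1))"
    using comp_Kf[of n] unfolding comp_def by blast
  have eH: "evalr fH [c, pc] (Hf n c pc)" for c pc using fH[rule_format, of "[c, pc]"] by simp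
  have eK: "evalr fK [a, qc] (Kf n a qc)" for a qc using fK[rule_format, of "[a, qc]"] by simp
  have tH: "tcomputes fH p (rH n p)" for p
    unfolding tcomputes_def
  proof
    fix c
    show "\<exists>k. evalr fH [c, prefix_code p k] (Suc (rH n p c)) \<and> (\<forall>k'<k. evalr fH [c, prefix_code p k'] 0)"
    proof (intro exI conjI allI impI)
      show "evalr fH [c, prefix_code p (Suc (c + k0 n))] (Suc (rH n p c))"
        using eH[of c "prefix_code p (Suc (c + k0 n))"] by (simp add: Hf_def lenc_prefix rH_def)
      fix k' assume "k' < Suc (c + k0 n)"
      then show "evalr fH [c, prefix_code p k'] 0"
        using eH[of c "prefix_code p k'"] by (simp add: Hf_def lenc_prefix)
    qed
  qed
  have tK: "tcomputes fK q (sK n q)" for q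
    unfolding tcomputes_def
  proof
    fix a
    show "\<exists>k. evalr fK [a, prefix_code q k] (Suc (sK n q a)) \<and> (\<forall>k'<k. evalr fK [a, prefix_code q k'] 0)"
    proof (cases "a = 0")
      case True
      show ?thesis
      proof (intro exI conjI allI impI)
        show "evalr fK [a, prefix_code q (k0 n)] (Suc (sK n q a))"
          using eK[of a "prefix_code q (k0 n)"] True by (simp add: Kf_def lenc_prefix sK_def)
        fix k' assume "k' < k0 n"
        then show "evalr fK [a, prefix_code q k'] 0"
          using eK[of a "prefix_code q k'"] True by (simp add: Kf_def lenc_prefix)
      qed
    next
      case False
      show ?thesis
      proof (intro exI[of _ 0] conjI allI impI)
        show "evalr fK [a, prefix_code q 0] (Suc (sK n q a))"
          using eK[of a "prefix_code q 0"] False by (simp add: Kf_def sK_def)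
      qed simp
    qed
  qed
  show ?thesis
    unfolding sW_le_def
  proof (rule exI[of _ fK], rule exI[of _ fH], intro allI impI)
    fix G p A
    assume G: "is_realizer delta_tree delta_cantor (C_width (Suc n)) G"
      and pA: "delta_fin_closed n p = Some A \<and> C_fin A \<noteq> {}"
    then have pA1: "delta_fin_closed n p = Some A" and Ane: "A \<noteq> {}" by (auto simp: C_fin_def)
    interpret tc n "alP p" using pA1 Ane by (rule tc_alP)
    let ?T = "Tr n (alP p)"
    have rset: "{w. rH n p (bcode w) = 1} = ?T"
    proof (rule set_eqI)
      fix w
      have "max (length w) (k0 n) \<le> Suc (bcode w + k0 n)" using length_le_bcode[of w] by simp
      then show "w \<in> {w. rH n p (bcode w) = 1} \<longleftrightarrow> w \<in> ?T"
        using memb_correct[of w n "Suc (bcode w + k0 n)" p] by (simp add: rH_def)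
    qed
    have r1: "\<forall>i. rH n p i \<le> 1" by (simp add: rH_def)
    have dT: "delta_tree (rH n p) = Some ?T"
      unfolding delta_tree_def rset using r1 Tr_tree by simp
    have cw: "C_width (Suc n) ?T = paths ?T" unfolding C_width_def using Tr_width by simp
    have "C_width (Suc n) ?T \<noteq> {}" unfolding cw using paths_ne by blast
    then obtain q y where qy: "G (rH n p) = Some q" "delta_cantor q = Some y" "y \<in> paths ?T"
      using G dT cw unfolding is_realizer_def by blast
    have q1: "\<forall>i. q i \<le> 1" and yq: "y = (\<lambda>i. q i = 1)"
      using qy(2) unfolding delta_cantor_def by (auto split: if_splits)
    have "Kdec n (prefix_code q (k0 n)) = (LEAST i. (\<forall>t<k0 n. y t = odd (i div 2 ^ t)) \<or> n \<le> i)"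
    proof -
      have "\<forall>t<k0 n. (pv (prefix_code q (k0 n)) t = 1) = y t" using pv_prefix yq by simp
      then show ?thesis unfolding Kdec_def by simp
    qed
    then have lab: "sK n q 0 \<in> Alv" using paths_label[OF qy(3)] by (simp add: sK_def)
    then have s0: "sK n q 0 \<le> n" unfolding Alv_def by blast
    have sA: "sK n q 0 \<in> A" using Alv_sub[OF pA1 Ane lab] .
    show "\<exists>r q s y. tcomputes fH p r \<and> G r = Some q \<and> tcomputes fK q s \<and> delta_fin n s = Some y \<and> y \<in> C_fin A"
    proof (rule exI[of _ "rH n p"], rule exI[of _ q], rule exI[of _ "sK n q"], rule exI[of _ "sK n q 0"], intro conjI)
      show "tcomputes fH p (rH n p)" by (rule tH)
      show "G (rH n p) = Some q" by (rule qy(1))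
      show "tcomputes fK q (sK n q)" by (rule tK)
      show "delta_fin n (sK n q) = Some (sK n q 0)" using s0 by (simp add: delta_fin_def)
      show "sK n q 0 \<in> C_fin A" using sA by (simp add: C_fin_def)
    qed
  qed
qed



definition ym :: "nat \<Rightarrow> nat \<Rightarrow> nat \<Rightarrow> nat \<Rightarrow> bool" where
  "ym n m j t = ((t < Suc n \<and> odd (j div 2 ^ t)) \<or> t = Suc n + m)"
definition Tm :: "nat \<Rightarrow> nat \<Rightarrow> bool list set" where
  "Tm n m = {w. \<exists>j\<le>n. w = map (ym n m j) [0..<length w]}"

lemma Tm_tree: "is_tree (Tm n m)"
  unfolding is_tree_def
proof (intro allI impI)
  fix w v assume "w @ v \<in> Tm n m"
  then obtain j where j: "j \<le> n" "w @ v = map (ym n m j) [0..<length (w @ v)]" unfolding Tm_def by blast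
  have "w = take (length w) (w @ v)" by simp
  also have "\<dots> = take (length w) (map (ym n m j) [0..<length (w @ v)])" using j(2) by simp
  also have "\<dots> = map (ym n m j) [0..<length w]" by (simp add: take_map)
  finally show "w \<in> Tm n m" unfolding Tm_def using j(1) by blast
qed

lemma ym_inj:
  assumes j: "j \<le> n" "j' \<le> n" and k: "Suc n \<le> 2 ^ k"
    and e: "map (ym n m j) [0..<k] = map (ym n m' j') [0..<k]"
  shows "j = j'"
proof -
  define L where "L = min k (Suc n)"
  have jL: "j < 2 ^ L" "j' < 2 ^ L"
  proof -
    have "Suc n \<le> 2 ^ Suc n" by (induction n) auto
    then have "Suc n \<le> 2 ^ L" unfolding L_def using k by (simp add: min_def)
    then show "j < 2 ^ L" "j' < 2 ^ L" using j by auto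
  qed
  have "\<forall>t<L. odd (j div 2 ^ t) = odd (j' div 2 ^ t)"
  proof (intro allI impI)
    fix t assume t: "t < L"
    then have tk: "t < k" "t < Suc n" unfolding L_def by auto
    have "ym n m j t = ym n m' j' t" using arg_cong[OF e, of "\<lambda>xs. xs ! t"] tk(1) by simp
    then show "odd (j div 2 ^ t) = odd (j' div 2 ^ t)" using tk(2) unfolding ym_def by simp
  qed
  then show ?thesis by (rule bits_eq[OF jL])
qed

lemma Tm_level: "{w \<in> Tm n m. length w = k} = (\<lambda>j. map (ym n m j) [0..<k]) ` {..n}"
  unfolding Tm_def by auto

lemma Tm_card: "Suc n \<le> 2 ^ k \<Longrightarrow> card {w \<in> Tm n m. length w = k} = Suc n"
proof -
  assume k: "Suc n \<le> 2 ^ k"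
  have "inj_on (\<lambda>j. map (ym n m j) [0..<k]) {..n}"
  proof (rule inj_onI)
    fix j j' assume "j \<in> {..n}" "j' \<in> {..n}" "map (ym n m j) [0..<k] = map (ym n m j') [0..<k]"
    then show "j = j'" using ym_inj[OF _ _ k] by simp
  qed
  then show ?thesis unfolding Tm_level by (simp add: card_image)
qed

lemma Tm_unary: "w \<in> Tm n m \<Longrightarrow> Suc n \<le> length w \<Longrightarrow> card {b. w @ [b] \<in> Tm n m} = 1"
proof -
  assume w: "w \<in> Tm n m" "Suc n \<le> length w"
  let ?L = "length w"
  obtain j where j: "j \<le> n" "w = map (ym n m j) [0..<?L]" using w(1) unfolding Tm_def by blast
  have k2: "Suc n \<le> 2 ^ ?L"
  proof -
    have "Suc n \<le> 2 ^ Suc n" by (induction n) auto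
    also have "\<dots> \<le> 2 ^ ?L" using w(2) by (intro power_increasing) auto
    finally show ?thesis .
  qed
  have "{b. w @ [b] \<in> Tm n m} = {ym n m j ?L}"
  proof (rule set_eqI, rule iffI)
    fix b assume "b \<in> {b. w @ [b] \<in> Tm n m}"
    then obtain j' where j': "j' \<le> n" "w @ [b] = map (ym n m j') [0..<Suc ?L]"
      unfolding Tm_def by auto
    then have "w @ [b] = map (ym n m j') [0..<?L] @ [ym n m j' ?L]" by simp
    then have "w = map (ym n m j') [0..<?L]" "b = ym n m j' ?L" by auto
    then have "map (ym n m j) [0..<?L] = map (ym n m j') [0..<?L]" using j(2) by simp
    then have "j = j'" by (rule ym_inj[OF j(1) j'(1) k2])
    then show "b \<in> {ym n m j ?L}" using \<open>b = ym n m j' ?L\<close> by simp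
  next
    fix b assume "b \<in> {ym n m j ?L}"
    then have "w @ [b] = map (ym n m j) [0..<length (w @ [b])]" using j(2) by simp
    then show "b \<in> {b. w @ [b] \<in> Tm n m}" unfolding Tm_def using j(1) by blast
  qed
  then show ?thesis by simp
qed

lemma Tm_width: "width_tree (Suc n) (Tm n m)"
  unfolding width_tree_def using Tm_card Tm_unary by blast

lemma Tm_paths_ne: "ym n m 0 \<in> paths (Tm n m)"
  unfolding paths_def Tm_def by auto

lemma Tm_paths_mark: "x \<in> paths (Tm n m) \<Longrightarrow> x (Suc n + m') = (m' = m)"
proof -
  assume x: "x \<in> paths (Tm n m)"
  let ?k = "Suc (Suc n + m')"
  have "map x [0..<?k] \<in> Tm n m" using x unfolding paths_def by blast
  then obtain j where "map x [0..<?k] = map (ym n m j) [0..<?k]" unfolding Tm_def by auto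
  then have "x (Suc n + m') = ym n m j (Suc n + m')"
    using arg_cong[of _ _ "\<lambda>xs. xs ! (Suc n + m')"] by fastforce
  then show ?thesis unfolding ym_def by simp
qed

lemma Tm_paths_unique: "x \<in> paths (Tm n m) \<Longrightarrow> x \<in> paths (Tm n m') \<Longrightarrow> m = m'"
  using Tm_paths_mark[of x n m m] Tm_paths_mark[of x n m' m] by simp

definition pT :: "nat \<Rightarrow> nat \<Rightarrow> nat \<Rightarrow> nat" where
  "pT n m c = (if \<exists>w\<in>Tm n m. bcode w = c then 1 else 0)"

lemma delta_tree_pT: "delta_tree (pT n m) = Some (Tm n m)"
proof -
  have "{w. pT n m (bcode w) = 1} = Tm n m"
    unfolding pT_def using bcode_inj by auto
  moreover have "\<forall>i. pT n m i \<le> 1" by (simp add: pT_def)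
  ultimately show ?thesis unfolding delta_tree_def using Tm_tree by simp
qed

definition ci :: "nat \<Rightarrow> nat \<Rightarrow> nat" where "ci i = (\<lambda>a. if a = 0 then i else 0)"

definition G0 :: "nat \<Rightarrow> (nat \<Rightarrow> nat) \<Rightarrow> (nat \<Rightarrow> nat) option" where
  "G0 n r = (case delta_fin_closed n r of Some A \<Rightarrow> if A \<noteq> {} then Some (ci (Min A)) else None | None \<Rightarrow> None)"

lemma fin_closed_sub: "delta_fin_closed n r = Some A \<Longrightarrow> A \<subseteq> {..n}"
  unfolding delta_fin_closed_def by (auto split: if_splits)

lemma G0_real: "is_realizer (delta_fin_closed n) (delta_fin n) C_fin (G0 n)"
  unfolding is_realizer_def
proof (intro allI impI)
  fix p A assume a: "delta_fin_closed n p = Some A \<and> C_fin A \<noteq> {}"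
  then have A: "delta_fin_closed n p = Some A" "A \<noteq> {}" by (auto simp: C_fin_def)
  have fin: "finite A" using fin_closed_sub[OF A(1)] finite_subset by blast
  have mA: "Min A \<in> A" using Min_in[OF fin A(2)] .
  then have mn: "Min A \<le> n" using fin_closed_sub[OF A(1)] by auto
  show "\<exists>q y. G0 n p = Some q \<and> delta_fin n q = Some y \<and> y \<in> C_fin A"
    using A mA mn by (auto simp: G0_def delta_fin_def ci_def C_fin_def)
qed

lemma part2: "\<not> sW_le delta_tree delta_cantor (C_width (Suc n)) (delta_fin_closed n) (delta_fin n) C_fin"
proof
  assume "sW_le delta_tree delta_cantor (C_width (Suc n)) (delta_fin_closed n) (delta_fin n) C_fin"
  then obtain fK fH where red: "\<forall>G. is_realizer (delta_fin_closed n) (delta_fin n) C_fin G \<longrightarrow>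
        (\<forall>p x. delta_tree p = Some x \<and> C_width (Suc n) x \<noteq> {} \<longrightarrow>
           (\<exists>r q s y. tcomputes fH p r \<and> G r = Some q \<and> tcomputes fK q s \<and>
                     delta_cantor s = Some y \<and> y \<in> C_width (Suc n) x))"
    unfolding sW_le_def by blast
  define P where "P i m = (\<exists>s y. tcomputes fK (ci i) s \<and> delta_cantor s = Some y \<and> y \<in> paths (Tm n m))" for i m
  define B where "B = {m. \<exists>i\<le>n. P i m}"
  define f where "f i = (SOME m. P i m)" for i
  have "B \<subseteq> f ` {..n}"
  proof
    fix m assume "m \<in> B"
    then obtain i where i: "i \<le> n" "P i m" unfolding B_def by blast
    have Pf: "P i (f i)" unfolding f_def by (rule someI[of "P i" m]) (rule i(2))
    obtain s y where sy: "tcomputes fK (ci i) s" "delta_cantor s = Some y" "y \<in> paths (Tm n m)"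
      using i(2) unfolding P_def by blast
    obtain s' y' where sy': "tcomputes fK (ci i) s'" "delta_cantor s' = Some y'" "y' \<in> paths (Tm n (f i))"
      using Pf unfolding P_def by blast
    have "s = s'" using tcomputes_det[OF sy(1) sy'(1)] .
    then have "y = y'" using sy(2) sy'(2) by simp
    then have "m = f i" using Tm_paths_unique sy(3) sy'(3) by blast
    then show "m \<in> f ` {..n}" using i(1) by blast
  qed
  then have "finite B" using finite_surj by blast
  then obtain m where m: "m \<notin> B" using ex_new_if_finite[OF infinite_UNIV_nat] by blast
  have cw: "C_width (Suc n) (Tm n m) = paths (Tm n m)" unfolding C_width_def using Tm_width by simp
  have "C_width (Suc n) (Tm n m) \<noteq> {}" unfolding cw using Tm_paths_ne by blast
  then obtain r q s y where rq: "tcomputes fH (pT n m) r" "G0 n r = Some q" "tcomputes fK q s"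
      "delta_cantor s = Some y" "y \<in> C_width (Suc n) (Tm n m)"
    using red G0_real delta_tree_pT by blast
  obtain A where A: "delta_fin_closed n r = Some A" "A \<noteq> {}" "q = ci (Min A)"
    using rq(2) unfolding G0_def by (auto split: option.splits if_splits)
  have fin: "finite A" using fin_closed_sub[OF A(1)] finite_subset by blast
  have "Min A \<le> n" using Min_in[OF fin A(2)] fin_closed_sub[OF A(1)] by auto
  moreover have "P (Min A) m" unfolding P_def using rq(3,4,5) A(3) cw by auto
  ultimately have "m \<in> B" unfolding B_def by blast
  then show False using m by simp
qed

theorem proposition25:
  fixes n :: nat
  shows "sW_less (delta_fin_closed n) (delta_fin n) C_fin
                 delta_tree delta_cantor (C_width (Suc n))"
  unfolding sW_less_def using part1 part2 by blast


end
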